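(* Let $K\ge 1$ be an integer, let $\underline{A}\in\mathbb{R}^{K\times K}$ be a symmetric, negative definite, $m$-banded matrix, and let $\underline{P}=[p_{i,j}]\in\mathbb{R}^{K\times K}$. Let $a=\lambda_{\min}(\underline{A})<0$, $b=\lambda_{\max}(\underline{A})<0$, $\kappa=a/b$, and set $m_1=Km$, $$\tau_1=\frac{1}{2|b|}\max\Big\{1,\frac{(1+\sqrt{\kappa})^2}{2\kappa}\Big\},\qquad \rho_1=\Big(\frac{\sqrt{\kappa}-1}{\sqrt{\kappa}+1}\Big)^{2/m_1}.$$ For $i,j\in\{1,\dots,K\}$ let $\underline{X}_{i,j}\in\mathbb{R}^{K\times K}$ be the unique solution of $\underline{A}\underline{X}_{i,j}+\underline{X}_{i,j}\underline{A}=\mathbf{q}_i p_{i,j}\mathbf{q}_j^T$, let $\overline{\mathbf{x}}_{i,j}=\mathrm{vec}(\underline{X}_{i,j})$ and denote its $s$-th entry ($s=1,\dots,K^2$) by $\overline{x}^{i,j}_s$. Let $\phi(i,j)=(j-1)K+i$. Then for all $i,j,s$, $$|\overline{x}^{i,j}_s|\le |p_{i,j}|\,\tau_1\,\rho_1^{|\phi(i,j)-s|}.$$ Moreover, if $\underline{X}$ is the unique solution of $\underline{A}\underline{X}+\underline{X}\underline{A}=\underline{P}$ and $\overline{x}_s$ denotes the $s$-th entry of $\mathrm{vec}(\underline{X})$, then $$|\overline{x}_s|\le \tau_1\sum_{i=1}^{K}\sum_{j=1}^{K}|p_{i,j}|\,\rho_1^{|\phi(i,j)-s|}\quad\text{for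 all } s=1,\dots,K^2.$$
   Context: A $K\times K$ matrix $Z=[z_{i,j}]$ is called $s$-banded (bandwidth $s$, $s$ an even positive integer) if $z_{i,j}=0$ whenever $|i-j|>s/2$. $\mathbf{q}_j\in\mathbb{R}^K$ denotes the $j$-th standard basis vector (all zeros except a $1$ in position $j$). $\mathrm{vec}(\cdot)$ is the standard column-stacking operator. $\lambda_{\min},\lambda_{\max}$ denote the minimal and maximal eigenvalues. *)

theory Defs
  imports "Jordan_Normal_Form.Matrix" "Jordan_Normal_Form.Char_Poly"
begin

(* square K x K real matrices are Jordan_Normal_Form matrices in carrier_mat K K;
   indices are 0-based: rows/columns 0..K-1, vec-entries 0..K^2-1 *)

definition banded :: "nat \<Rightarrow> real mat \<Rightarrow> bool" where
  "banded s Z \<longleftrightarrow> (\<forall>i<dim_row Z. \<forall>j<dim_col Z.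
      real s / 2 < \<bar>real i - real j\<bar> \<longrightarrow> Z $$ (i, j) = 0)"

definition symmetric_mat :: "real mat \<Rightarrow> bool" where
  "symmetric_mat Z \<longleftrightarrow> transpose_mat Z = Z"

definition negative_definite :: "real mat \<Rightarrow> bool" where
  "negative_definite Z \<longleftrightarrow>
     (\<forall>x \<in> carrier_vec (dim_row Z). x \<noteq> 0\<^sub>v (dim_row Z) \<longrightarrow> x \<bullet> (Z *\<^sub>v x) < 0)"

definition lambda_min :: "real mat \<Rightarrow> real" where
  "lambda_min Z = Min {x. eigenvalue Z x}"

definition lambda_max :: "real mat \<Rightarrow> real" where
  "lambda_max Z = Max {x. eigenvalue Z x}"

definition qcol :: "nat \<Rightarrow> nat \<Rightarrow> real mat" where
  "qcol K j = mat_of_cols K [unit_vec K j]"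

(* column-stacking vec, 0-based: entry s of vec(X) *)
definition vec_entry :: "nat \<Rightarrow> real mat \<Rightarrow> nat \<Rightarrow> real" where
  "vec_entry K X s = X $$ (s mod K, s div K)"

(* phi(i,j) = (j-1)K + i in 1-based indexing; 0-based version: j*K + i *)
definition phi :: "nat \<Rightarrow> nat \<Rightarrow> nat \<Rightarrow> nat" where
  "phi K i j = j * K + i"

definition tau1 :: "real \<Rightarrow> real \<Rightarrow> real" where
  "tau1 a b = (let \<kappa> = a / b in
     (1 / (2 * \<bar>b\<bar>)) * max 1 ((1 + sqrt \<kappa>)^2 / (2 * \<kappa>)))"

definition rho1 :: "nat \<Rightarrow> nat \<Rightarrow> real \<Rightarrow> real \<Rightarrow> real" where
  "rho1 K m a b = (let \<kappa> = a / b in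
     ((sqrt \<kappa> - 1) / (sqrt \<kappa> + 1)) powr (2 / real (K * m)))"

end

theory Submission
  imports Defs
begin


lemma sq_nonneg: "0 \<le> (v::real vec) \<bullet> v"
  unfolding scalar_prod_def by (intro sum_nonneg) auto

lemma entry_sq_le: "i < dim_vec v \<Longrightarrow> (v $ i)^2 \<le> (v::real vec) \<bullet> v"
  unfolding scalar_prod_def power2_eq_square
  by (rule member_le_sum[of i "{0..<dim_vec v}" "\<lambda>i. v$i * v$i", simplified]) auto

lemma sq_zero: assumes "(v::real vec) \<in> carrier_vec n" "v \<bullet> v = 0" shows "v = 0\<^sub>v n"
proof (rule eq_vecI)
  fix i assume "i < dim_vec (0\<^sub>v n)"
  then have "i < dim_vec v" using assms by auto
  from entry_sq_le[OF this] assms have "(v$i)^2 \<le> 0" by simp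
  then show "v $ i = 0\<^sub>v n $ i" using \<open>i < dim_vec (0\<^sub>v n)\<close> by auto
qed (use assms in auto)

lemma cauchy_schwarz_vec: assumes v: "(v::real vec) \<in> carrier_vec n" and w: "w \<in> carrier_vec n"
  shows "(v \<bullet> w)^2 \<le> (v \<bullet> v) * (w \<bullet> w)"
proof (cases "w \<bullet> w = 0")
  case True
  then have "w = 0\<^sub>v n" using sq_zero w by blast
  then show ?thesis using v by simp
next
  case False
  then have pos: "w \<bullet> w > 0" using sq_nonneg[of w] by linarith
  define t where "t = (v \<bullet> w) / (w \<bullet> w)"
  have "0 \<le> (v - t \<cdot>\<^sub>v w) \<bullet> (v - t \<cdot>\<^sub>v w)" by (rule sq_nonneg)
  also have "\<dots> = v \<bullet> v - 2 * t * (v \<bullet> w) + t * t * (w \<bullet> w)"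
    using v w by (simp add: minus_scalar_prod_distrib scalar_prod_minus_distrib comm_scalar_prod[of w n v] algebra_simps)
  also have "\<dots> = v \<bullet> v - (v \<bullet> w)^2 / (w \<bullet> w)"
    using pos unfolding t_def by (simp add: field_simps power2_eq_square)
  finally have "(v \<bullet> w)^2 / (w \<bullet> w) \<le> v \<bullet> v" by simp
  then show ?thesis using pos by (simp add: field_simps)
qed

definition symm :: "real mat \<Rightarrow> bool" where "symm C \<longleftrightarrow> transpose_mat C = C"

lemma symm_swap: assumes C: "C \<in> carrier_mat n n" "symm C" and v: "v \<in> carrier_vec n" and w: "w \<in> carrier_vec n"
  shows "v \<bullet> (C *\<^sub>v w) = w \<bullet> (C *\<^sub>v v)"
proof -
  have "v \<bullet> (C *\<^sub>v w) = (transpose_mat C *\<^sub>v v) \<bullet> w"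
    using transpose_vec_mult_scalar[OF C(1) w v] by simp
  also have "\<dots> = w \<bullet> (C *\<^sub>v v)" using C v w unfolding symm_def
    by (metis comm_scalar_prod mult_mat_vec_carrier)
  finally show ?thesis .
qed

lemma quad_expand: assumes C: "C \<in> carrier_mat n n" "symm C" and v: "v \<in> carrier_vec n" and u: "u \<in> carrier_vec n"
  shows "(v + t \<cdot>\<^sub>v u) \<bullet> (C *\<^sub>v (v + t \<cdot>\<^sub>v u)) = v \<bullet> (C *\<^sub>v v) + 2 * t * (u \<bullet> (C *\<^sub>v v)) + t*t * (u \<bullet> (C *\<^sub>v u))"
proof -
  have cu: "C *\<^sub>v u \<in> carrier_vec n" and cv: "C *\<^sub>v v \<in> carrier_vec n" using C u v by auto
  have "C *\<^sub>v (v + t \<cdot>\<^sub>v u) = C *\<^sub>v v + t \<cdot>\<^sub>v (C *\<^sub>v u)"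
    using C u v by (simp add: mult_add_distrib_mat_vec[OF C(1)] mult_mat_vec[OF C(1)])
  then have "(v + t \<cdot>\<^sub>v u) \<bullet> (C *\<^sub>v (v + t \<cdot>\<^sub>v u)) = (v + t \<cdot>\<^sub>v u) \<bullet> (C *\<^sub>v v + t \<cdot>\<^sub>v (C *\<^sub>v u))" by simp
  also have "\<dots> = v \<bullet> (C *\<^sub>v v) + t * (v \<bullet> (C *\<^sub>v u)) + t * (u \<bullet> (C *\<^sub>v v)) + t * t * (u \<bullet> (C *\<^sub>v u))"
    using cu cv u v by (simp add: add_scalar_prod_distrib[of _ n] scalar_prod_add_distrib[of _ n] algebra_simps)
  also have "v \<bullet> (C *\<^sub>v u) = u \<bullet> (C *\<^sub>v v)" by (rule symm_swap[OF C v u])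
  finally show ?thesis by simp
qed

lemma sq_expand: assumes v: "(v::real vec) \<in> carrier_vec n" and u: "u \<in> carrier_vec n"
  shows "(v + t \<cdot>\<^sub>v u) \<bullet> (v + t \<cdot>\<^sub>v u) = v \<bullet> v + 2 * t * (u \<bullet> v) + t*t * (u \<bullet> u)"
  using u v by (simp add: add_scalar_prod_distrib[of _ n] scalar_prod_add_distrib[of _ n] comm_scalar_prod[of v n u] algebra_simps)

lemma polarization: assumes C: "C \<in> carrier_mat n n" "symm C" and d: "\<delta> > 0"
  and bnd: "\<And>w. w \<in> carrier_vec n \<Longrightarrow> \<bar>w \<bullet> (C *\<^sub>v w)\<bar> \<le> \<delta> * (w \<bullet> w)"
  and v: "v \<in> carrier_vec n"
  shows "(C *\<^sub>v v) \<bullet> (C *\<^sub>v v) \<le> \<delta>^2 * (v \<bullet> v)"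
proof -
  define u where "u = C *\<^sub>v v"
  define t where "t = 1 / \<delta>"
  have u: "u \<in> carrier_vec n" using C v unfolding u_def by auto
  have vp: "v + t \<cdot>\<^sub>v u \<in> carrier_vec n" and vm: "v + (-t) \<cdot>\<^sub>v u \<in> carrier_vec n" using u v by auto
  note e1 = quad_expand[OF C v u, of t, folded u_def]
  note e2 = quad_expand[OF C v u, of "-t", folded u_def]
  note s1 = sq_expand[OF v u, of t]
  note s2 = sq_expand[OF v u, of "-t"]
  have vu: "u \<bullet> v = v \<bullet> u" using u v comm_scalar_prod by blast
  from bnd[OF vp] have b1: "v \<bullet> u + 2 * t * (u \<bullet> u) + t*t * (u \<bullet> (C *\<^sub>v u)) \<le> \<delta> * (v \<bullet> v + 2 * t * (v \<bullet> u) + t*t * (u \<bullet> u))"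
    unfolding e1 s1 vu u_def[symmetric] by (simp add: abs_le_iff)
  from bnd[OF vm] have b2: "- (v \<bullet> u - 2 * t * (u \<bullet> u) + t*t * (u \<bullet> (C *\<^sub>v u))) \<le> \<delta> * (v \<bullet> v - 2 * t * (v \<bullet> u) + t*t * (u \<bullet> u))"
    unfolding e2 s2 vu u_def[symmetric] by (simp add: abs_le_iff)
  from b1 b2 have
    "4 * t * (u \<bullet> u) \<le> \<delta> * (2 * (v \<bullet> v) + 2 * t * t * (u \<bullet> u))"
    by (simp add: algebra_simps)
  then have "4 * (u \<bullet> u) / \<delta> \<le> 2 * \<delta> * (v \<bullet> v) + 2 * (u \<bullet> u) / \<delta>"
    using d unfolding t_def by (simp add: field_simps)
  then have "(u \<bullet> u) / \<delta> \<le> \<delta> * (v \<bullet> v)" by simp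
  then show ?thesis using d unfolding u_def by (simp add: field_simps power2_eq_square)
qed


lemma transpose_smult_one: "transpose_mat (c \<cdot>\<^sub>m 1\<^sub>m n) = (c \<cdot>\<^sub>m 1\<^sub>m n :: real mat)"
  by (intro eq_matI) auto

lemma smult_one_mat_vec: assumes w: "(w::real vec) \<in> carrier_vec n" shows "(c \<cdot>\<^sub>m 1\<^sub>m n) *\<^sub>v w = c \<cdot>\<^sub>v w"
proof (rule eq_vecI)
  fix i assume i: "i < dim_vec (c \<cdot>\<^sub>v w)"
  then have i': "i < n" using w by simp
  have "row (c \<cdot>\<^sub>m 1\<^sub>m n) i = c \<cdot>\<^sub>v unit_vec n i" using i' by (auto simp: row_smult)
  moreover have "(c \<cdot>\<^sub>v unit_vec n i) \<bullet> w = c * w $ i" using w i' by simp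
  ultimately show "((c \<cdot>\<^sub>m 1\<^sub>m n) *\<^sub>v w) $ i = (c \<cdot>\<^sub>v w) $ i" using i' w by simp
qed (use w in simp)

lemma det_inv: assumes A: "(A::real mat) \<in> carrier_mat n n" and d: "det A \<noteq> 0"
  obtains D where "D \<in> carrier_mat n n" "D * A = 1\<^sub>m n" "A * D = 1\<^sub>m n"
proof -
  from det_non_zero_imp_unit[OF A d, of "()"]
  show ?thesis using that unfolding Units_def ring_mat_def by auto
qed

lemma quad_entry_bound: assumes A: "(A::real mat) \<in> carrier_mat n n" and v: "v \<in> carrier_vec n"
  shows "\<bar>v \<bullet> (A *\<^sub>v v)\<bar> \<le> (\<Sum>i<n. \<Sum>j<n. \<bar>A $$ (i,j)\<bar>) * (v \<bullet> v)"
proof -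
  have vv: "\<And>i j. i < n \<Longrightarrow> j < n \<Longrightarrow> \<bar>v $ i * v $ j\<bar> \<le> v \<bullet> v"
  proof -
    fix i j assume ij: "i < n" "j < n"
    have "(v$i)^2 \<le> v \<bullet> v" "(v$j)^2 \<le> v \<bullet> v" using entry_sq_le ij v by auto
    moreover have "2 * \<bar>v $ i * v $ j\<bar> \<le> (v$i)^2 + (v$j)^2"
      using sum_squares_bound[of "\<bar>v$i\<bar>" "\<bar>v$j\<bar>"] by (simp add: abs_mult power2_eq_square)
    ultimately show "\<bar>v $ i * v $ j\<bar> \<le> v \<bullet> v" by linarith
  qed
  have "v \<bullet> (A *\<^sub>v v) = (\<Sum>i<n. \<Sum>j<n. A $$ (i,j) * (v $ i * v $ j))"
    using A v by (auto simp: scalar_prod_def sum_distrib_left lessThan_atLeast0 intro!: sum.cong simp: algebra_simps)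
  also have "\<bar>\<dots>\<bar> \<le> (\<Sum>i<n. \<Sum>j<n. \<bar>A $$ (i,j)\<bar> * (v \<bullet> v))"
    apply (rule order_trans[OF sum_abs], rule sum_mono)
    apply (rule order_trans[OF sum_abs], rule sum_mono)
    using vv by (simp add: abs_mult mult_left_mono)
  finally show ?thesis by (simp add: sum_distrib_right)
qed

lemma norm_mult_bound: assumes D: "(D::real mat) \<in> carrier_mat n n" and u: "u \<in> carrier_vec n"
  shows "(D *\<^sub>v u) \<bullet> (D *\<^sub>v u) \<le> (\<Sum>i<n. row D i \<bullet> row D i) * (u \<bullet> u)"
proof -
  have "(D *\<^sub>v u) \<bullet> (D *\<^sub>v u) = (\<Sum>i<n. (row D i \<bullet> u)^2)"
    using D u unfolding scalar_prod_def[of "D *\<^sub>v u"] by (auto simp: power2_eq_square lessThan_atLeast0)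
  also have "\<dots> \<le> (\<Sum>i<n. (row D i \<bullet> row D i) * (u \<bullet> u))"
    by (rule sum_mono, rule cauchy_schwarz_vec[of _ n], insert D u, auto)
  finally show ?thesis by (simp add: sum_distrib_right)
qed

lemma psd_bound: assumes C: "C \<in> carrier_mat n n" "symm C" and b: "\<beta> > 0"
  and bnd: "\<And>w. w \<in> carrier_vec n \<Longrightarrow> 0 \<le> w \<bullet> (C *\<^sub>v w) \<and> w \<bullet> (C *\<^sub>v w) \<le> \<beta> * (w \<bullet> w)"
  and v: "v \<in> carrier_vec n"
  shows "(C *\<^sub>v v) \<bullet> (C *\<^sub>v v) \<le> \<beta> * (v \<bullet> (C *\<^sub>v v))"
proof -
  define C' where "C' = C - (\<beta>/2) \<cdot>\<^sub>m 1\<^sub>m n"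
  have C'c: "C' \<in> carrier_mat n n" using C unfolding C'_def by auto
  have C'v: "\<And>w. w \<in> carrier_vec n \<Longrightarrow> C' *\<^sub>v w = C *\<^sub>v w + (-\<beta>/2) \<cdot>\<^sub>v w"
    unfolding C'_def using C by (subst minus_mult_distrib_mat_vec[of _ n n]) (auto simp: smult_one_mat_vec)
  have sC': "symm C'" using C unfolding C'_def symm_def
    by (simp add: transpose_minus[of _ n n] transpose_smult_one)
  have wC': "\<And>w. w \<in> carrier_vec n \<Longrightarrow> w \<bullet> (C' *\<^sub>v w) = w \<bullet> (C *\<^sub>v w) - \<beta>/2 * (w \<bullet> w)"
    using C by (simp add: C'v scalar_prod_add_distrib[of _ n])
  have "(C' *\<^sub>v v) \<bullet> (C' *\<^sub>v v) \<le> (\<beta>/2)^2 * (v \<bullet> v)"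
  proof (rule polarization[OF C'c sC' _ _ v])
    fix w :: "real vec" assume w: "w \<in> carrier_vec n"
    from bnd[OF w] show "\<bar>w \<bullet> (C' *\<^sub>v w)\<bar> \<le> \<beta> / 2 * (w \<bullet> w)" unfolding wC'[OF w] by (auto simp: abs_le_iff field_simps)
  qed (use b in auto)
  moreover have "(C' *\<^sub>v v) \<bullet> (C' *\<^sub>v v) = (C *\<^sub>v v) \<bullet> (C *\<^sub>v v) + 2 * (-\<beta>/2) * (v \<bullet> (C *\<^sub>v v)) + (-\<beta>/2) * (-\<beta>/2) * (v \<bullet> v)"
    unfolding C'v[OF v] by (rule sq_expand[of _ n], insert C v, auto)
  ultimately show ?thesis by (simp add: power2_eq_square algebra_simps)
qed

lemma rayleigh_sup: assumes A: "(A::real mat) \<in> carrier_mat n n" "symm A" and n: "n > 0"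
  shows "\<exists>\<mu>. eigenvalue A \<mu> \<and> (\<forall>v\<in>carrier_vec n. v \<bullet> (A *\<^sub>v v) \<le> \<mu> * (v \<bullet> v))"
proof -
  define R0 where "R0 = (\<Sum>i<n. \<Sum>j<n. \<bar>A $$ (i,j)\<bar>)"
  define S where "S = {v \<bullet> (A *\<^sub>v v) | v. v \<in> carrier_vec n \<and> v \<bullet> v = 1}"
  have e0: "(unit_vec n 0 :: real vec) \<in> carrier_vec n" "unit_vec n 0 \<bullet> (unit_vec n 0 :: real vec) = 1"
  proof -
    show "unit_vec n 0 \<in> carrier_vec n" by simp
    have "unit_vec n 0 \<bullet> unit_vec n 0 = (unit_vec n 0 :: real vec) $ 0" by (rule scalar_prod_right_unit[OF n])
    then show "unit_vec n 0 \<bullet> (unit_vec n 0 :: real vec) = 1" using n by simp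
  qed
  have Sne: "S \<noteq> {}" using e0 unfolding S_def by blast
  have Sbdd: "bdd_above S" unfolding S_def bdd_above_def
  proof (intro exI[of _ R0] ballI)
    fix x assume "x \<in> {v \<bullet> (A *\<^sub>v v) |v. v \<in> carrier_vec n \<and> v \<bullet> v = 1}"
    then obtain v where "v \<in> carrier_vec n" "v \<bullet> v = 1" "x = v \<bullet> (A *\<^sub>v v)" by blast
    then show "x \<le> R0" using quad_entry_bound[OF A(1), of v] unfolding R0_def by (simp add: abs_le_iff)
  qed
  define \<mu> where "\<mu> = Sup S"
  have Sle: "\<And>x. x \<in> S \<Longrightarrow> x \<le> \<mu>" unfolding \<mu>_def using Sbdd by (simp add: cSup_upper)
  have allv: "\<And>v. v \<in> carrier_vec n \<Longrightarrow> v \<bullet> (A *\<^sub>v v) \<le> \<mu> * (v \<bullet> v)"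
  proof -
    fix v :: "real vec" assume v: "v \<in> carrier_vec n"
    show "v \<bullet> (A *\<^sub>v v) \<le> \<mu> * (v \<bullet> v)"
    proof (cases "v \<bullet> v = 0")
      case True
      then have "v = 0\<^sub>v n" using sq_zero v by blast
      then show ?thesis using A by simp
    next
      case False
      then have pos: "v \<bullet> v > 0" using sq_nonneg[of v] by linarith
      define c where "c = 1 / sqrt (v \<bullet> v)"
      have cc: "c * c * (v \<bullet> v) = 1" unfolding c_def using pos
        by (simp add: field_simps)
      have "c \<cdot>\<^sub>v v \<in> carrier_vec n" using v by auto
      moreover have "(c \<cdot>\<^sub>v v) \<bullet> (c \<cdot>\<^sub>v v) = 1" using v cc by (simp add: algebra_simps)
      ultimately have "(c \<cdot>\<^sub>v v) \<bullet> (A *\<^sub>v (c \<cdot>\<^sub>v v)) \<in> S" unfolding S_def by blast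
      then have "(c \<cdot>\<^sub>v v) \<bullet> (A *\<^sub>v (c \<cdot>\<^sub>v v)) \<le> \<mu>" by (rule Sle)
      moreover have "(c \<cdot>\<^sub>v v) \<bullet> (A *\<^sub>v (c \<cdot>\<^sub>v v)) = c * c * (v \<bullet> (A *\<^sub>v v))"
        using v A by (simp add: mult_mat_vec[OF A(1)] algebra_simps)
      ultimately have "c * c * (v \<bullet> (A *\<^sub>v v)) \<le> c * c * (v \<bullet> v) * \<mu>" using cc by simp
      moreover have "c * c > 0" using pos unfolding c_def by simp
      ultimately have "(c * c) * (v \<bullet> (A *\<^sub>v v)) \<le> (c * c) * (\<mu> * (v \<bullet> v))" "c * c > 0" by (simp_all add: algebra_simps)
      then show ?thesis by (meson mult_le_cancel_left_pos)
    qed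
  qed
  have R0nn: "R0 \<ge> 0" unfolding R0_def by (intro sum_nonneg) auto
  have muR: "- R0 \<le> \<mu>"
  proof -
    have "unit_vec n 0 \<bullet> (A *\<^sub>v unit_vec n 0) \<in> S" using e0 unfolding S_def by blast
    then have "unit_vec n 0 \<bullet> (A *\<^sub>v unit_vec n 0) \<le> \<mu>" by (rule Sle)
    moreover have "\<bar>unit_vec n 0 \<bullet> (A *\<^sub>v unit_vec n 0)\<bar> \<le> R0"
      using quad_entry_bound[OF A(1) e0(1)] e0(2) unfolding R0_def by simp
    ultimately show ?thesis by linarith
  qed
  define C where "C = \<mu> \<cdot>\<^sub>m 1\<^sub>m n - A"
  have Cc: "C \<in> carrier_mat n n" using A unfolding C_def by auto
  have Cv: "\<And>w. w \<in> carrier_vec n \<Longrightarrow> C *\<^sub>v w = \<mu> \<cdot>\<^sub>v w - A *\<^sub>v w"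
    unfolding C_def using A by (subst minus_mult_distrib_mat_vec[of _ n n]) (auto simp: smult_one_mat_vec)
  have sC: "symm C" using A unfolding C_def symm_def by (simp add: transpose_minus[of _ n n] transpose_smult_one)
  have wC: "\<And>w. w \<in> carrier_vec n \<Longrightarrow> w \<bullet> (C *\<^sub>v w) = \<mu> * (w \<bullet> w) - w \<bullet> (A *\<^sub>v w)"
    using A by (simp add: Cv scalar_prod_minus_distrib[of _ n])
  define \<beta> where "\<beta> = \<bar>\<mu>\<bar> + R0 + 1"
  have bpos: "\<beta> > 0" unfolding \<beta>_def using R0nn by simp
  have Cbnd: "\<And>w. w \<in> carrier_vec n \<Longrightarrow> 0 \<le> w \<bullet> (C *\<^sub>v w) \<and> w \<bullet> (C *\<^sub>v w) \<le> \<beta> * (w \<bullet> w)"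
  proof -
    fix w :: "real vec" assume w: "w \<in> carrier_vec n"
    have q: "\<bar>w \<bullet> (A *\<^sub>v w)\<bar> \<le> R0 * (w \<bullet> w)" using quad_entry_bound[OF A(1) w] unfolding R0_def .
    have ww: "w \<bullet> w \<ge> 0" by (rule sq_nonneg)
    have "\<mu> * (w \<bullet> w) \<le> \<bar>\<mu>\<bar> * (w \<bullet> w)" using ww by (simp add: mult_right_mono)
    then show "0 \<le> w \<bullet> (C *\<^sub>v w) \<and> w \<bullet> (C *\<^sub>v w) \<le> \<beta> * (w \<bullet> w)"
      unfolding wC[OF w] \<beta>_def using allv[OF w] q ww by (auto simp: algebra_simps abs_le_iff)
  qed
  have "det C = 0"
  proof (rule ccontr)
    assume "det C \<noteq> 0"
    then obtain D where D: "D \<in> carrier_mat n n" "D * C = 1\<^sub>m n" using det_inv[OF Cc] by metis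
    define \<gamma> where "\<gamma> = (\<Sum>i<n. row D i \<bullet> row D i)"
    have gnn: "\<gamma> \<ge> 0" unfolding \<gamma>_def by (intro sum_nonneg sq_nonneg)
    have key: "\<And>v. v \<in> carrier_vec n \<Longrightarrow> v \<bullet> v = 1 \<Longrightarrow> 1 \<le> \<gamma> * \<beta> * (v \<bullet> (C *\<^sub>v v))"
    proof -
      fix v :: "real vec" assume v: "v \<in> carrier_vec n" and v1: "v \<bullet> v = 1"
      have "v = D *\<^sub>v (C *\<^sub>v v)" using D Cc v by (simp add: assoc_mult_mat_vec[symmetric, of _ n n _ n])
      then have "v \<bullet> v \<le> \<gamma> * ((C *\<^sub>v v) \<bullet> (C *\<^sub>v v))"
        using norm_mult_bound[OF D(1), of "C *\<^sub>v v"] Cc v unfolding \<gamma>_def by auto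
      also have "\<dots> \<le> \<gamma> * (\<beta> * (v \<bullet> (C *\<^sub>v v)))"
        by (rule mult_left_mono[OF psd_bound[OF Cc sC bpos Cbnd v] gnn])
      finally show "1 \<le> \<gamma> * \<beta> * (v \<bullet> (C *\<^sub>v v))" using v1 by simp
    qed
    have gpos: "\<gamma> > 0"
    proof (rule ccontr)
      assume "\<not> \<gamma> > 0" then have "\<gamma> = 0" using gnn by simp
      with key[OF e0] show False by simp
    qed
    define \<epsilon> where "\<epsilon> = 1 / (\<gamma> * \<beta>)"
    have epos: "\<epsilon> > 0" unfolding \<epsilon>_def using gpos bpos by simp
    have "\<And>x. x \<in> S \<Longrightarrow> x \<le> \<mu> - \<epsilon>"
    proof -
      fix x assume "x \<in> S"
      then obtain v where v: "v \<in> carrier_vec n" "v \<bullet> v = 1" and x: "x = v \<bullet> (A *\<^sub>v v)" unfolding S_def by blast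
      from key[OF v] have "\<epsilon> \<le> v \<bullet> (C *\<^sub>v v)" unfolding \<epsilon>_def using gpos bpos
        by (simp add: field_simps)
      then show "x \<le> \<mu> - \<epsilon>" unfolding x using wC[OF v(1)] v(2) by simp
    qed
    then have "\<mu> \<le> \<mu> - \<epsilon>" unfolding \<mu>_def using Sne by (intro cSup_least) auto
    then show False using epos by simp
  qed
  then obtain v where v: "v \<in> carrier_vec n" "v \<noteq> 0\<^sub>v n" "C *\<^sub>v v = 0\<^sub>v n"
    using det_0_iff_vec_prod_zero[OF Cc] by blast
  have "A *\<^sub>v v = \<mu> \<cdot>\<^sub>v v"
  proof (rule eq_vecI)
    fix i assume i: "i < dim_vec (\<mu> \<cdot>\<^sub>v v)"
    have "(C *\<^sub>v v) $ i = 0" using v(3) i v by simp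
    then show "(A *\<^sub>v v) $ i = (\<mu> \<cdot>\<^sub>v v) $ i" using Cv[OF v(1)] i v A by simp
  qed (use A v in auto)
  then have "eigenvalue A \<mu>" unfolding eigenvalue_def eigenvector_def using v A by auto
  then show ?thesis using allv by blast
qed


lemma zero_smult_vec_r[simp]: "(0::real) \<cdot>\<^sub>v (v::real vec) = 0\<^sub>v (dim_vec v)"
  by (intro eq_vecI) auto
lemma mat_vec_zero_r[simp]: "(M::real mat) \<in> carrier_mat nr nc \<Longrightarrow> M *\<^sub>v 0\<^sub>v nc = 0\<^sub>v nr"
  by (intro eq_vecI) auto

definition evalv :: "real poly \<Rightarrow> real mat \<Rightarrow> real vec \<Rightarrow> real vec" where
  "evalv p M v = foldr (\<lambda>a w. a \<cdot>\<^sub>v v + M *\<^sub>v w) (coeffs p) (0\<^sub>v (dim_vec v))"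

context fixes M :: "real mat" and n :: nat assumes M: "M \<in> carrier_mat n n"
begin

lemma evalv_0[simp]: "evalv 0 M v = 0\<^sub>v (dim_vec v)" unfolding evalv_def by simp

lemma evalv_pCons: assumes v: "v \<in> carrier_vec n"
  shows "evalv (pCons a p) M v = a \<cdot>\<^sub>v v + M *\<^sub>v evalv p M v"
proof (cases "p = 0 \<and> a = 0")
  case True
  then show ?thesis using M v by (simp add: evalv_def)
next
  case False
  then have "coeffs (pCons a p) = a # coeffs p" by (auto simp: cCons_def)
  then show ?thesis using M unfolding evalv_def by simp
qed

lemma evalv_carrier[simp]: "v \<in> carrier_vec n \<Longrightarrow> evalv p M v \<in> carrier_vec n"
  by (induct p) (use M in \<open>auto simp: evalv_pCons\<close>)

lemma evalv_dim[simp]: "v \<in> carrier_vec n \<Longrightarrow> dim_vec (evalv p M v) = n"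
  using evalv_carrier by auto

lemma evalv_add: assumes v: "v \<in> carrier_vec n" shows "evalv (p + q) M v = evalv p M v + evalv q M v"
proof (induct p arbitrary: q)
  case 0 then show ?case using v by simp
next
  case (pCons a p)
  show ?case
  proof (cases q rule: pCons_cases)
    case (pCons b q')
    have ep: "evalv p M v \<in> carrier_vec n" "evalv q' M v \<in> carrier_vec n" using v by auto
    have "evalv (pCons a p + q) M v = (a + b) \<cdot>\<^sub>v v + M *\<^sub>v (evalv p M v + evalv q' M v)"
      unfolding pCons add_pCons evalv_pCons[OF v] pCons.hyps ..
    also have "\<dots> = (a \<cdot>\<^sub>v v + M *\<^sub>v evalv p M v) + (b \<cdot>\<^sub>v v + M *\<^sub>v evalv q' M v)"
      using M v ep by (intro eq_vecI) (auto simp: scalar_prod_add_distrib[of _ n] algebra_simps)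
    finally show ?thesis unfolding pCons evalv_pCons[OF v] .
  qed
qed

lemma evalv_smult: assumes v: "v \<in> carrier_vec n" shows "evalv (Polynomial.smult c p) M v = c \<cdot>\<^sub>v evalv p M v"
proof (induct p)
  case 0 then show ?case using v by (intro eq_vecI) auto
next
  case (pCons a p)
  have ep: "evalv p M v \<in> carrier_vec n" using v by auto
  show ?case using M v ep pCons.hyps
    by (simp add: evalv_pCons) (intro eq_vecI, auto simp: algebra_simps)
qed

lemma evalv_lin_add: assumes u: "u \<in> carrier_vec n" and w: "w \<in> carrier_vec n"
  shows "evalv p M (u + w) = evalv p M u + evalv p M w"
proof (induct p)
  case 0 then show ?case using u w by (intro eq_vecI) auto
next
  case (pCons a p)
  have ep: "evalv p M u \<in> carrier_vec n" "evalv p M w \<in> carrier_vec n" using u w by auto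
  show ?case using M u w ep pCons.hyps
    by (simp add: evalv_pCons) (intro eq_vecI, auto simp: scalar_prod_add_distrib[of _ n] algebra_simps)
qed

lemma evalv_lin_smult: assumes u: "u \<in> carrier_vec n"
  shows "evalv p M (c \<cdot>\<^sub>v u) = c \<cdot>\<^sub>v evalv p M u"
proof (induct p)
  case 0 then show ?case using u by (intro eq_vecI) auto
next
  case (pCons a p)
  have ep: "evalv p M u \<in> carrier_vec n" using u by auto
  show ?case using M u ep pCons.hyps
    by (simp add: evalv_pCons) (intro eq_vecI, auto simp: algebra_simps)
qed

lemma evalv_pCons0: assumes v: "v \<in> carrier_vec n" shows "evalv (pCons 0 p) M v = M *\<^sub>v evalv p M v"
  using M v by (simp add: evalv_pCons) 

lemma evalv_mult: assumes v: "v \<in> carrier_vec n" shows "evalv (p * q) M v = evalv p M (evalv q M v)"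
proof (induct p)
  case 0 then show ?case using v by simp
next
  case (pCons a p)
  have eq: "evalv q M v \<in> carrier_vec n" using v by simp
  have "evalv (pCons a p * q) M v = a \<cdot>\<^sub>v evalv q M v + M *\<^sub>v (evalv p M (evalv q M v))"
    using v by (simp add: evalv_add evalv_smult evalv_pCons0 pCons.hyps)
  also have "\<dots> = evalv (pCons a p) M (evalv q M v)"
    using eq by (simp add: evalv_pCons)
  finally show ?case .
qed

lemma evalv_const: "v \<in> carrier_vec n \<Longrightarrow> evalv [:c:] M v = c \<cdot>\<^sub>v v"
  using M by (simp add: evalv_pCons)

lemma evalv_one: "v \<in> carrier_vec n \<Longrightarrow> evalv 1 M v = v"
  using evalv_const[of v 1] by (simp add: one_pCons)

lemma evalv_x: "v \<in> carrier_vec n \<Longrightarrow> evalv [:0,1:] M v = M *\<^sub>v v"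
  using M by (simp add: evalv_pCons evalv_const)

lemma evalv_diff: assumes v: "v \<in> carrier_vec n" shows "evalv (p - q) M v = evalv p M v - evalv q M v"
proof -
  have "evalv p M v = evalv ((p - q) + q) M v" by simp
  also have "\<dots> = evalv (p - q) M v + evalv q M v" by (rule evalv_add[OF v])
  finally have e: "evalv p M v = evalv (p - q) M v + evalv q M v" .
  show ?thesis
  proof (rule eq_vecI)
    fix i assume "i < dim_vec (evalv p M v - evalv q M v)"
    then have i: "i < n" using v by simp
    have "evalv p M v $ i = evalv (p - q) M v $ i + evalv q M v $ i" using arg_cong[OF e, of "\<lambda>x. x $ i"] i v by simp
    then show "evalv (p - q) M v $ i = (evalv p M v - evalv q M v) $ i" using i v by simp
  qed (use v in simp)
qed

lemma evalv_comm: assumes v: "v \<in> carrier_vec n" shows "evalv p M (M *\<^sub>v v) = M *\<^sub>v evalv p M v"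
proof -
  have "evalv p M (M *\<^sub>v v) = evalv (p * [:0,1:]) M v" unfolding evalv_mult[OF v] evalv_x[OF v] ..
  also have "\<dots> = evalv ([:0,1:] * p) M v" by (simp add: mult.commute)
  also have "\<dots> = M *\<^sub>v evalv p M v" using v M by (simp only: evalv_mult evalv_x evalv_carrier)
  finally show ?thesis .
qed

lemma evalv_selfadj: assumes s: "symm M" shows "\<And>u w. u \<in> carrier_vec n \<Longrightarrow> w \<in> carrier_vec n \<Longrightarrow>
   u \<bullet> evalv p M w = w \<bullet> evalv p M u"
proof (induct p)
  case 0 then show ?case by simp
next
  case (pCons a p u w)
  have c: "evalv p M u \<in> carrier_vec n" "evalv p M w \<in> carrier_vec n" "M *\<^sub>v u \<in> carrier_vec n" "M *\<^sub>v w \<in> carrier_vec n"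
    using pCons.prems M by auto
  have "u \<bullet> (M *\<^sub>v evalv p M w) = evalv p M w \<bullet> (M *\<^sub>v u)" by (rule symm_swap[OF M s pCons.prems(1) c(2)])
  also have "\<dots> = (M *\<^sub>v u) \<bullet> evalv p M w" using c comm_scalar_prod by blast
  also have "\<dots> = w \<bullet> evalv p M (M *\<^sub>v u)" by (rule pCons.hyps(2)[OF c(3) pCons.prems(2)])
  also have "\<dots> = w \<bullet> (M *\<^sub>v evalv p M u)" using evalv_comm[OF pCons.prems(1)] by simp
  finally have e: "u \<bullet> (M *\<^sub>v evalv p M w) = w \<bullet> (M *\<^sub>v evalv p M u)" .
  have uw: "u \<bullet> w = w \<bullet> u" using pCons.prems comm_scalar_prod by blast
  show ?case using pCons.prems c M
    by (simp add: evalv_pCons scalar_prod_add_distrib[of _ n] e uw)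
qed

end

definition near :: "nat \<Rightarrow> nat \<Rightarrow> real vec \<Rightarrow> bool" where
  "near d t v \<longleftrightarrow> (\<forall>s < dim_vec v. (s + d < t \<or> t + d < s) \<longrightarrow> v $ s = 0)"

definition bandw :: "nat \<Rightarrow> real mat \<Rightarrow> bool" where
  "bandw d B \<longleftrightarrow> (\<forall>i j. i < dim_row B \<longrightarrow> j < dim_col B \<longrightarrow> (i + d < j \<or> j + d < i) \<longrightarrow> B $$ (i,j) = 0)"

lemma near_mult: assumes B: "B \<in> carrier_mat n n" and v: "v \<in> carrier_vec n"
  and b: "bandw h B" and nv: "near d t v" shows "near (h + d) t (B *\<^sub>v v)"
  unfolding near_def
proof (intro allI impI)
  fix i assume i: "i < dim_vec (B *\<^sub>v v)" and ij: "i + (h + d) < t \<or> t + (h + d) < i"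
  have "(B *\<^sub>v v) $ i = (\<Sum>l = 0..<n. B $$ (i,l) * v $ l)"
    using i v B by (auto simp: scalar_prod_def)
  also have "\<dots> = 0"
  proof (rule sum.neutral, intro ballI)
    fix l assume l: "l \<in> {0..<n}"
    show "B $$ (i,l) * v $ l = 0"
    proof (cases "i + h < l \<or> l + h < i")
      case True then show ?thesis using b i l B unfolding bandw_def by auto
    next
      case False
      then have "l + d < t \<or> t + d < l" using ij by linarith
      then show ?thesis using nv l v unfolding near_def by auto
    qed
  qed
  finally show "(B *\<^sub>v v) $ i = 0" .
qed

lemma near_mono: "near d t v \<Longrightarrow> d \<le> d' \<Longrightarrow> near d' t v"
  unfolding near_def by fastforce

lemma evalv_near: assumes M: "M \<in> carrier_mat n n" and b: "bandw h M" and v: "v \<in> carrier_vec n" and nv: "near 0 t v"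
  shows "near (degree p * h) t (evalv p M v)"
proof (induct p)
  case 0 then show ?case unfolding near_def evalv_def by simp
next
  case (pCons a p)
  have ep: "evalv p M v \<in> carrier_vec n" using M v by simp
  show ?case
  proof (cases "p = 0")
    case True then show ?thesis using M v nv by (simp add: evalv_pCons near_def)
  next
    case False
    have n1: "near (h + degree p * h) t (M *\<^sub>v evalv p M v)" by (rule near_mult[OF M ep b pCons.hyps(2)])
    have n2: "near (h + degree p * h) t v" by (rule near_mono[OF nv]) simp
    have "near (h + degree p * h) t (a \<cdot>\<^sub>v v + M *\<^sub>v evalv p M v)"
      using n1 n2 M v unfolding near_def by auto
    then show ?thesis using False M v by (simp add: evalv_pCons[OF M v])
  qed
qed


primrec pw :: "nat \<Rightarrow> real poly \<times> real poly" where
  "pw 0 = (1, 0)"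
| "pw (Suc j) = ([:0,1:] * fst (pw j) - [:1,0,-1:] * snd (pw j), [:0,1:] * snd (pw j) + fst (pw j))"

lemma pw_degree: "degree (fst (pw j)) \<le> j \<and> (snd (pw j) = 0 \<or> Suc (degree (snd (pw j))) \<le> j)"
proof (induct j)
  case 0 then show ?case by simp
next
  case (Suc j)
  let ?a = "fst (pw j)" and ?b = "snd (pw j)"
  have da: "degree ([:0,1:] * ?a) \<le> Suc j"
    using degree_mult_le[of "[:0,1:]" ?a] Suc by simp
  have db: "degree ([:1,0,-1:] * ?b) \<le> Suc j"
  proof (cases "?b = 0")
    case True then show ?thesis by simp
  next
    case False
    then have "Suc (degree ?b) \<le> j" using Suc by simp
    moreover have "degree ([:1,0,-1:] * ?b) \<le> 2 + degree ?b"
      using degree_mult_le[of "[:1,0,-1:]" ?b] by simp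
    ultimately show ?thesis by simp
  qed
  have d1: "degree (fst (pw (Suc j))) \<le> Suc j"
    using degree_diff_le[OF da db] by simp
  have d2: "Suc (degree (snd (pw (Suc j)))) \<le> Suc j"
  proof -
    have "degree ([:0,1:] * ?b) \<le> j"
    proof (cases "?b = 0")
      case True then show ?thesis by simp
    next
      case False
      then have "Suc (degree ?b) \<le> j" using Suc by simp
      then show ?thesis using degree_mult_le[of "[:0,1:]" ?b] by simp
    qed
    then have "degree ([:0,1:] * ?b + ?a) \<le> j" using Suc degree_add_le by blast
    then show ?thesis by simp
  qed
  show ?case using d1 d2 by simp
qed

definition ev :: "real \<Rightarrow> 'a::real_field \<Rightarrow> real poly \<times> real poly \<Rightarrow> 'a" where
  "ev y t P = of_real (poly (fst P) y) + t * of_real (poly (snd P) y)"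

lemma pw_ev: assumes t: "t^2 = (of_real (y^2 - 1) :: 'a::real_field)"
  shows "ev y t (pw j) = (of_real y + t)^j"
proof (induct j)
  case 0 then show ?case by (simp add: ev_def)
next
  case (Suc j)
  let ?a = "(of_real (poly (fst (pw j)) y) :: 'a)" and ?b = "(of_real (poly (snd (pw j)) y) :: 'a)"
  have "ev y t (pw (Suc j)) = of_real y * ?a - (1 - of_real y^2) * ?b + t * (of_real y * ?b + ?a)"
    by (simp add: ev_def algebra_simps power2_eq_square)
  also have "\<dots> = (of_real y + t) * (?a + t * ?b)"
  proof -
    have "of_real y * ?a - (1 - of_real y^2) * ?b + t * (of_real y * ?b + ?a) - (of_real y + t) * (?a + t * ?b)
       = ?b * (of_real y^2 - 1 - t^2)" by (simp add: algebra_simps power2_eq_square)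
    also have "\<dots> = 0" using t by simp
    finally show ?thesis by simp
  qed
  also have "?a + t * ?b = (of_real y + t)^j" using Suc by (simp add: ev_def)
  finally show ?case by simp
qed

definition wm :: "nat \<Rightarrow> real poly \<times> real poly" where
  "wm k = (if k = 0 then ([:0,1:], -1) else pw (k - 1))"

definition hpol :: "real \<Rightarrow> nat \<Rightarrow> real poly" where
  "hpol q k = fst (pw (Suc k)) + Polynomial.smult (2*q) (fst (pw k)) + Polynomial.smult (q^2) (fst (wm k))"
definition gpol :: "real \<Rightarrow> nat \<Rightarrow> real poly" where
  "gpol q k = snd (pw (Suc k)) + Polynomial.smult (2*q) (snd (pw k)) + Polynomial.smult (q^2) (snd (wm k))"

lemma hpol_degree: "degree (hpol q k) \<le> Suc k"
proof -
  have a: "degree (fst (pw (Suc k))) \<le> Suc k" using pw_degree by blast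
  have b: "degree (Polynomial.smult (2*q) (fst (pw k))) \<le> Suc k" using pw_degree[of k] by simp
  have c: "degree (Polynomial.smult (q^2) (fst (wm k))) \<le> Suc k"
    using pw_degree[of "k-1"] by (auto simp: wm_def)
  show ?thesis unfolding hpol_def using a b c degree_add_le by metis
qed

lemma F_ev: assumes t: "t^2 = (of_real (y^2 - 1) :: 'a::real_field)"
  shows "of_real (poly (hpol q k) y) + t * of_real (poly (gpol q k) y)
     = (of_real y + t + of_real q)^2 * (of_real y + t)^k * (of_real y - t)"
proof -
  let ?w = "(of_real y + t :: 'a)" and ?w' = "(of_real y - t :: 'a)"
  have ww: "?w * ?w' = 1" using t by (simp add: algebra_simps power2_eq_square)
  have evm: "ev y t (wm k) = (if k = 0 then ?w' else ?w^(k-1))"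
    unfolding wm_def using pw_ev[OF t] by (auto simp: ev_def)
  have "of_real (poly (hpol q k) y) + t * of_real (poly (gpol q k) y)
      = ev y t (pw (Suc k)) + 2 * of_real q * ev y t (pw k) + (of_real q)^2 * ev y t (wm k)"
    unfolding hpol_def gpol_def ev_def by (simp add: algebra_simps)
  also have "\<dots> = ?w^(Suc k) + 2 * of_real q * ?w^k + (of_real q)^2 * (if k = 0 then ?w' else ?w^(k-1))"
    unfolding pw_ev[OF t] evm ..
  also have "\<dots> = (?w + of_real q)^2 * ?w^k * ?w'"
  proof (cases k)
    case 0
    have "(?w + of_real q)^2 * ?w^k * ?w' - (?w^(Suc k) + 2 * of_real q * ?w^k + (of_real q)^2 * (if k = 0 then ?w' else ?w^(k-1)))
      = (?w + 2 * of_real q) * (?w * ?w' - 1)" unfolding 0 by (simp add: algebra_simps power2_eq_square)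
    also have "\<dots> = 0" using ww by simp
    finally show ?thesis by simp
  next
    case (Suc k')
    have "?w^k * ?w' = ?w^k' * (?w * ?w')" unfolding Suc by (simp add: mult_ac)
    then have "?w^k * ?w' = ?w^k'" using ww by simp
    then have "(?w + of_real q)^2 * ?w^k * ?w' = (?w + of_real q)^2 * ?w^k'" by (simp add: mult.assoc)
    then show ?thesis unfolding Suc by (simp add: algebra_simps power2_eq_square)
  qed
  finally show ?thesis .
qed

lemma F_prod: assumes t: "t^2 = (of_real (y^2 - 1) :: 'a::real_field)"
  shows "of_real ((poly (hpol q k) y)^2 + (1 - y^2) * (poly (gpol q k) y)^2) = (of_real ((1 + q^2 + 2*q*y)^2) :: 'a)"
proof -
  let ?w = "(of_real y + t :: 'a)" and ?w' = "(of_real y - t :: 'a)"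
  let ?H = "(of_real (poly (hpol q k) y) :: 'a)" and ?G = "(of_real (poly (gpol q k) y) :: 'a)"
  have ww: "?w * ?w' = 1" using t by (simp add: algebra_simps power2_eq_square)
  have t': "(-t)^2 = (of_real (y^2 - 1) :: 'a)" using t by simp
  have e1: "?H + t * ?G = (?w + of_real q)^2 * ?w^k * ?w'" by (rule F_ev[OF t])
  have e2: "?H - t * ?G = (?w' + of_real q)^2 * ?w'^k * ?w" using F_ev[OF t'] by simp
  have "?H^2 - t^2 * ?G^2 = (?H + t * ?G) * (?H - t * ?G)" by (simp add: algebra_simps power2_eq_square)
  also have "\<dots> = ((?w + of_real q) * (?w' + of_real q))^2 * (?w * ?w')^k * (?w * ?w')"
    unfolding e1 e2 power_mult_distrib by (simp add: mult_ac)
  also have "\<dots> = ((?w + of_real q) * (?w' + of_real q))^2" using ww by simp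
  also have "(?w + of_real q) * (?w' + of_real q) = ?w * ?w' + of_real q * (?w + ?w') + (of_real q)^2"
    by (simp add: algebra_simps power2_eq_square)
  also have "\<dots> = of_real (1 + q^2 + 2*q*y)" using ww by (simp add: algebra_simps)
  finally show ?thesis using t by (simp add: algebra_simps)
qed

lemma cheb_identity: "(poly (hpol q k) y)^2 + (1 - y^2) * (poly (gpol q k) y)^2 = (1 + q^2 + 2*q*y)^2"
proof (cases "y^2 \<ge> 1")
  case True
  define t where "t = sqrt (y^2 - 1)"
  have "t^2 = of_real (y^2 - 1)" using True unfolding t_def by simp
  from F_prod[OF this] show ?thesis by simp
next
  case False
  define t where "t = \<i> * complex_of_real (sqrt (1 - y^2))"
  have "t^2 = of_real (y^2 - 1)" using False unfolding t_def
    by (simp add: power_mult_distrib of_real_power[symmetric] del: of_real_power)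
  from F_prod[OF this] show ?thesis by (metis of_real_eq_iff)
qed

lemma hpol_y0: assumes q: "0 < q" "q < 1"
  shows "poly (hpol q k) (-(1 + q^2)/(2*q)) = (1/q - q)^2 * (-1/q)^k * (-q) / 2"
proof -
  define y where "y = -(1 + q^2)/(2*q)"
  define t where "t = (q^2 - 1)/(2*q)"
  have t: "t^2 = of_real (y^2 - 1)" unfolding t_def y_def using q
    by (simp add: field_simps power2_eq_square)
  have t': "(-t)^2 = of_real (y^2 - 1)" using t by simp
  have w: "y + t = -1/q" and w': "y - t = -q" unfolding y_def t_def using q by (auto simp: field_simps power2_eq_square)
  have "poly (hpol q k) y + t * poly (gpol q k) y = (y + t + q)^2 * (y + t)^k * (y - t)"
    using F_ev[OF t, of q k] by simp
  also have "\<dots> = (1/q - q)^2 * (-1/q)^k * (-q)" unfolding w w' by (simp add: power2_eq_square algebra_simps)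
  finally have e1: "poly (hpol q k) y + t * poly (gpol q k) y = (1/q - q)^2 * (-1/q)^k * (-q)" .
  have e2: "poly (hpol q k) y - t * poly (gpol q k) y = 0"
    using F_ev[OF t', of q k] w' by simp
  from e1 e2 show ?thesis unfolding y_def[symmetric] by (simp add: field_simps)
qed


lemma qfrac: fixes s q :: real assumes s1: "1 < s" and q: "q = (s - 1)/(s + 1)"
  shows "(1 + q^2)/(2*q) = (s*s+1)/(s*s-1)"
proof -
  have p: "s + 1 > 0" "s - 1 > 0" "s*s - 1 > 0" using s1 by (auto, smt (verit) less_1_mult)
  have q0: "q > 0" unfolding q using p by simp
  have "(1 + q^2) * (s*s-1) = (s*s+1) * (2*q)" unfolding q using p by (simp add: field_simps power2_eq_square)
  then show ?thesis using p q0 by (simp add: frac_eq_eq)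
qed
lemma lofrac: fixes s lo hi :: real assumes s1: "1 < s" and lo: "lo > 0" and hi: "hi = s^2*lo"
  shows "(lo+hi)/(hi-lo) = (s*s+1)/(s*s-1)"
proof -
  have p: "s*s - 1 > 0" using s1 by (smt (verit) less_1_mult)
  have "(lo+hi)/(hi-lo) = (lo*(s*s+1))/(lo*(s*s-1))" unfolding hi by (simp add: algebra_simps power2_eq_square)
  then show ?thesis using lo by simp
qed

lemma Eaux: fixes s lo Q :: real assumes s1: "1 < s" and lo: "0 < lo"
  shows "4*((s - 1)/(s + 1))/(lo * (s - 1) * (s + 1)) * (2 * Q) / (4*s/(s+1)^2)^2 = Q*(1+s)^2/(2*s^2*lo)"
proof -
  have p: "s - 1 > 0" "s + 1 > 0" "s > 0" using s1 by auto
  have a: "4*((s - 1)/(s + 1))/(lo * (s - 1) * (s + 1)) = 4/(lo * (s+1)^2)"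
  proof -
    have "4*((s - 1)/(s + 1))/(lo * (s - 1) * (s + 1)) = (4 * (s - 1)) / ((lo * (s+1)^2) * (s - 1))"
      by (simp add: power2_eq_square mult_ac)
    also have "\<dots> = 4/(lo * (s+1)^2)" using p by (rule_tac mult_divide_mult_cancel_right) auto
    finally show ?thesis .
  qed
  have b: "(4*s/(s+1)^2)^2 = 16*s^2/(s+1)^4" by (simp add: power_divide power_mult_distrib)
  define X where "X = (s+1)^2"
  have X: "X > 0" "(s+1)^4 = X^2" "(1+s)^2 = X" unfolding X_def using p by (auto simp: power_mult[symmetric] add.commute)
  have c: "4/(lo * X) * (2 * Q) / (16*s^2/X^2) = Q*X/(2*s^2*lo)"
    using X(1) p lo by (simp add: power2_eq_square field_simps)
  show ?thesis using a b c unfolding X_def[symmetric] X(2,3) by simp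
qed

lemma E_value: fixes lo hi s q :: real and k :: nat
  assumes lo: "0 < lo" and s1: "1 < s" and hi: "hi = s^2 * lo" and q: "q = (s - 1)/(s + 1)"
  shows "(4*q/(hi - lo) / ((1/q - q)^2 * (-1/q)^k * (-q) / 2))^2 = (q^(k+1)*(1+s)^2/(2*s^2*lo))^2"
proof -
  have q0: "q > 0" "q < 1" using s1 unfolding q by (auto simp: field_simps)
  have ne: "s + 1 \<noteq> 0" "1 + (s*s + s*2) \<noteq> 0" using s1 by (auto simp: add_pos_pos) (smt (verit) mult_pos_pos)
  have qq: "1 - q^2 = 4*s/(s+1)^2" unfolding q using s1 ne by (simp add: field_simps power2_eq_square)
  have hl: "hi - lo = lo * (s - 1) * (s + 1)" unfolding hi by (simp add: algebra_simps power2_eq_square)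
  have H2: "((1/q - q)^2 * (-1/q)^k * (-q) / 2)^2 = ((1 - q^2)^2 / (2 * q^(k+1)))^2"
  proof -
    have "(1/q - q) = (1 - q^2)/q" using q0 by (simp add: field_simps power2_eq_square)
    then have "((1/q - q)^2 * (-1/q)^k * (-q) / 2)^2 = ((1 - q^2)^2 / q^2 * (1/q)^k * q / 2)^2"
      by (simp add: power_mult_distrib power_divide power_minus' power2_eq_square)
    also have "\<dots> = ((1 - q^2)^2 / (2 * q^(k+1)))^2" using q0 by (simp add: field_simps power2_eq_square)
    finally show ?thesis .
  qed
  define D where "D = (1/q - q)^2 * (-1/q)^k * (-q) / 2"
  define Dp where "Dp = (1 - q^2)^2 / (2 * q^(k+1))"
  define a where "a = 4*q/(hi - lo)"
  have "(a / D)^2 = a^2 / D^2" by (simp add: power_divide)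
  also have "\<dots> = a^2 / Dp^2" using H2 unfolding D_def Dp_def by simp
  also have "\<dots> = (a / Dp)^2" by (simp add: power_divide)
  also have "a / Dp = 4*q/(hi - lo) * (2 * q^(k+1)) / (1 - q^2)^2" unfolding a_def Dp_def by simp
  also have "4*q/(hi - lo) * (2 * q^(k+1)) / (1 - q^2)^2 = q^(k+1)*(1+s)^2/(2*s^2*lo)"
  proof -
    define Q where "Q = q^(k+1)"
    have "4*q/(lo * (s - 1) * (s + 1)) * (2 * Q) / (4*s/(s+1)^2)^2 = Q*(1+s)^2/(2*s^2*lo)"
      unfolding q by (rule Eaux[OF s1 lo])
    then show ?thesis unfolding qq hl Q_def .
  qed
  finally show ?thesis unfolding a_def D_def .
qed

lemma cheb_poly: fixes lo hi :: real and k :: nat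
  assumes lo: "0 < lo" and lh: "lo < hi"
  defines "s \<equiv> sqrt (hi/lo)"
  defines "q \<equiv> (s - 1)/(s + 1)"
  defines "L \<equiv> [:-(lo+hi)/(hi-lo), 2/(hi-lo):]"
  defines "E \<equiv> q^(k+1)*(1+s)^2/(2*s^2*lo)"
  shows "\<exists>p G c. degree p \<le> k \<and> c \<ge> 0 \<and>
     Polynomial.smult (E^2) ([:0,1:]*[:0,1:]) - (1 - [:0,1:]*p)*(1 - [:0,1:]*p) = Polynomial.smult c (G*G - (L*G)*(L*G))"
proof -
  have s1: "s > 1" unfolding s_def using lo lh by simp
  have qd: "q = (s - 1)/(s + 1)" unfolding q_def ..
  have hi: "hi = s^2 * lo" unfolding s_def using lo lh by simp
  have q0: "q > 0" "q < 1" using s1 unfolding q_def by (auto simp: field_simps)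
  define y0 where "y0 = -(1 + q^2)/(2*q)"
  have ne: "s + 1 \<noteq> 0" "s - 1 \<noteq> 0" "1 + (s*s + s*2) \<noteq> 0" "lo*(s*s) - lo \<noteq> 0" "1 + s*(s*s) - (s + s*s) \<noteq> 0"
  proof -
    show "s + 1 \<noteq> 0" "s - 1 \<noteq> 0" "1 + (s*s + s*2) \<noteq> 0" using s1 by (auto simp: add_pos_pos) (smt (verit) mult_pos_pos)
    have "s*s > 1" using s1 by (metis less_1_mult)
    then show "lo*(s*s) - lo \<noteq> 0" using lo by auto
    have "1 + s*(s*s) - (s + s*s) = (s - 1) * (s*s - 1)" by (simp add: algebra_simps)
    then show "1 + s*(s*s) - (s + s*s) \<noteq> 0" using \<open>s*s > 1\<close> s1 by simp
  qed
  have fr: "(1 + q^2)/(2*q) = (lo+hi)/(hi-lo)" using qfrac[OF s1 qd] lofrac[OF s1 lo hi] by simp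
  have L0: "poly L 0 = y0"
  proof -
    have "poly L 0 = -(lo+hi)/(hi-lo)" unfolding L_def by simp
    also have "\<dots> = -((lo+hi)/(hi-lo))" by (rule minus_divide_left[symmetric])
    also have "\<dots> = -((1 + q^2)/(2*q))" using fr by simp
    also have "\<dots> = -(1 + q^2)/(2*q)" by (rule minus_divide_left)
    finally show ?thesis unfolding y0_def .
  qed
  have fr2: "1 + q^2 = 2*q*((lo+hi)/(hi-lo))" using fr q0 by (simp add: field_simps)
  define H0 where "H0 = (1/q - q)^2 * (-1/q)^k * (-q) / 2"
  have hy0: "poly (hpol q k) y0 = H0" unfolding y0_def H0_def by (rule hpol_y0[OF q0])
  have "q * q < 1 * 1" using q0 by (intro mult_strict_mono) auto
  then have H0nz: "H0 \<noteq> 0" unfolding H0_def using q0 by (simp add: field_simps)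
  define lam where "lam = 1 / H0"
  define r where "r = Polynomial.smult lam (pcompose (hpol q k) L)"
  define G where "G = pcompose (gpol q k) L"
  define k1 where "k1 = 4*q/(hi-lo)"
  have lin: "\<And>x. 1 + q^2 + 2*q*poly L x = k1 * x"
    unfolding L_def k1_def using fr2 by (simp add: algebra_simps add_divide_distrib diff_divide_distrib)
  have ev: "(k1 / H0)^2 = E^2" using E_value[OF lo s1 hi qd, of k] unfolding k1_def H0_def E_def .
  have "lam^2 * k1^2 = (k1/H0)^2" unfolding lam_def by (simp add: power_divide)
  then have E2: "E^2 = lam^2 * k1^2" using ev by simp
  have r0: "poly r 0 = 1" unfolding r_def using L0 hy0 H0nz lam_def by (simp add: poly_pcompose)
  have "poly (1 - r) 0 = 0" using r0 by simp
  then have "[:0,1:] dvd (1 - r)" using poly_eq_0_iff_dvd[of "1 - r" 0] by simp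
  then obtain p where p: "1 - r = [:0,1:] * p" by (rule dvdE)
  have rp: "1 - [:0,1:] * p = r" using p by (simp add: algebra_simps)
  have degL: "degree L \<le> 1" unfolding L_def by simp
  have dr: "degree r \<le> Suc k"
  proof -
    have "degree (pcompose (hpol q k) L) \<le> degree (hpol q k) * degree L" by (rule degree_pcompose_le)
    also have "\<dots> \<le> Suc k * 1" using hpol_degree[of q k] degL by (intro mult_mono) auto
    finally show ?thesis unfolding r_def by simp
  qed
  have d1r: "degree (1 - r) \<le> Suc k" using dr by (intro degree_diff_le) auto
  have dp: "degree p \<le> k"
  proof (cases "p = 0")
    case True then show ?thesis by simp
  next
    case False
    then have "degree ([:0,1:] * p) = 1 + degree p" by (subst degree_mult_eq) auto
    then show ?thesis using d1r p by simp
  qed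
  have ident: "Polynomial.smult (E^2) ([:0,1:]*[:0,1:]) - r * r = Polynomial.smult (lam^2) (G*G - (L*G)*(L*G))"
  proof (rule poly_eq_poly_eq_iff[THEN iffD1], rule ext)
    fix x :: real
    define l where "l = poly L x"
    have ci: "(poly (hpol q k) l)^2 = (k1 * x)^2 - (1 - l^2) * (poly (gpol q k) l)^2"
      using cheb_identity[of q k l] lin[of x] unfolding l_def by (simp add: algebra_simps)
    have "poly (Polynomial.smult (E^2) ([:0,1:]*[:0,1:]) - r * r) x = E^2 * x^2 - lam^2 * (poly (hpol q k) l)^2"
      unfolding r_def l_def by (simp add: poly_pcompose power2_eq_square algebra_simps)
    also have "\<dots> = lam^2 * ((1 - l^2) * (poly (gpol q k) l)^2)" unfolding ci E2 by (simp add: algebra_simps)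
    also have "\<dots> = poly (Polynomial.smult (lam^2) (G*G - (L*G)*(L*G))) x"
      unfolding G_def l_def by (simp add: poly_pcompose power2_eq_square algebra_simps)
    finally show "poly (Polynomial.smult (E^2) ([:0,1:]*[:0,1:]) - r * r) x = poly (Polynomial.smult (lam^2) (G*G - (L*G)*(L*G))) x" .
  qed
  show ?thesis
    by (rule exI[of _ p], rule exI[of _ G], rule exI[of _ "lam^2"]) (use dp ident rp in auto)
qed


lemma transpose_smult_r: "transpose_mat (c \<cdot>\<^sub>m (B::real mat)) = c \<cdot>\<^sub>m transpose_mat B"
  by (intro eq_matI) auto

lemma unit_sq: "t < n \<Longrightarrow> (\<beta> \<cdot>\<^sub>v unit_vec n t) \<bullet> (\<beta> \<cdot>\<^sub>v unit_vec n t) = (\<beta>::real)^2"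
  by (simp add: power2_eq_square)

lemma core_bound:
  fixes n H :: nat and M :: "real mat" and lo hi \<beta> :: real
  assumes M: "M \<in> carrier_mat n n" "symm M" "bandw H M" and H: "H \<ge> 1"
    and lo: "0 < lo" "lo \<le> hi"
    and form: "\<And>w. w \<in> carrier_vec n \<Longrightarrow> lo*(w \<bullet> w) \<le> w \<bullet> (M *\<^sub>v w) \<and> w \<bullet> (M *\<^sub>v w) \<le> hi*(w \<bullet> w)"
    and y: "y \<in> carrier_vec n" and t: "t < n" and eq: "M *\<^sub>v y = \<beta> \<cdot>\<^sub>v unit_vec n t"
    and s: "s < n"
  shows "\<bar>y $ s\<bar> \<le> \<bar>\<beta>\<bar> * ((1/lo) * max 1 ((1 + sqrt(hi/lo))^2/(2*(hi/lo))))
        * (((sqrt(hi/lo) - 1)/(sqrt(hi/lo)+1)) powr (1/real H)) ^ (nat \<bar>int t - int s\<bar>)"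
proof -
  define \<kappa> where "\<kappa> = hi/lo"
  define sk where "sk = sqrt \<kappa>"
  define q where "q = (sk - 1)/(sk + 1)"
  define \<tau> where "\<tau> = (1/lo) * max 1 ((1 + sk)^2/(2*\<kappa>))"
  define \<rho> where "\<rho> = q powr (1/real H)"
  define d where "d = nat \<bar>int t - int s\<bar>"
  have k1: "\<kappa> \<ge> 1" unfolding \<kappa>_def using lo by simp
  have sk1: "sk \<ge> 1" unfolding sk_def using k1 by simp
  have q0: "0 \<le> q" "q < 1" unfolding q_def using sk1 by auto
  have tau: "\<tau> \<ge> 1/lo" unfolding \<tau>_def using lo by (simp add: field_simps)
  have ys: "y $ s ^ 2 \<le> y \<bullet> y" using entry_sq_le[of s y] y s by simp
  have My: "(M *\<^sub>v y) \<bullet> (M *\<^sub>v y) = \<beta>^2" unfolding eq using unit_sq[OF t] .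
  have basic: "\<bar>y $ s\<bar> \<le> \<bar>\<beta>\<bar> / lo"
  proof -
    have cs: "(y \<bullet> (M *\<^sub>v y))^2 \<le> (y \<bullet> y) * \<beta>^2" using cauchy_schwarz_vec[of y n "M *\<^sub>v y"] y M My by simp
    have f: "lo * (y \<bullet> y) \<le> y \<bullet> (M *\<^sub>v y)" using form[OF y] by simp
    have yy: "y \<bullet> y \<ge> 0" by (rule sq_nonneg)
    have "(lo * (y \<bullet> y))^2 \<le> (y \<bullet> (M *\<^sub>v y))^2"
      using f yy lo by (intro power_mono) auto
    then have "lo^2 * (y \<bullet> y) * (y \<bullet> y) \<le> \<beta>^2 * (y \<bullet> y)" using cs by (simp add: power2_eq_square algebra_simps)
    then have "lo^2 * (y \<bullet> y) \<le> \<beta>^2 \<or> y \<bullet> y = 0" using yy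
      by (metis mult_right_le_imp_le order_le_less)
    then have "lo^2 * (y $ s)^2 \<le> \<beta>^2" using ys yy lo
      by (metis (no_types, opaque_lifting) dual_order.trans mult_left_mono mult_zero_right power2_eq_square zero_le_power2 order.refl mult_eq_0_iff le_zero_eq)
    then have "(lo * \<bar>y $ s\<bar>)^2 \<le> \<bar>\<beta>\<bar>^2" by (simp add: power_mult_distrib)
    then have "lo * \<bar>y $ s\<bar> \<le> \<bar>\<beta>\<bar>" using lo by (meson abs_ge_zero power2_le_imp_le)
    then show ?thesis using lo by (simp add: field_simps)
  qed
  have main: "\<bar>y $ s\<bar> \<le> \<bar>\<beta>\<bar> * \<tau> * \<rho> ^ d"
  proof (cases "d = 0")
    case True
    have "1 * \<bar>\<beta>\<bar> \<le> (\<tau> * lo) * \<bar>\<beta>\<bar>" using tau lo by (intro mult_right_mono) (auto simp: field_simps)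
    then have "\<bar>\<beta>\<bar> / lo \<le> \<bar>\<beta>\<bar> * \<tau> * \<rho> ^ d" using True lo by (simp add: field_simps)
    then show ?thesis using basic by linarith
  next
    case False
    then have st: "s \<noteq> t" unfolding d_def by auto
    show ?thesis
    proof (cases "lo = hi")
      case True
      define C where "C = M - lo \<cdot>\<^sub>m 1\<^sub>m n"
      have Cc: "C \<in> carrier_mat n n" unfolding C_def using M by auto
      have Cv: "\<And>w. w \<in> carrier_vec n \<Longrightarrow> C *\<^sub>v w = M *\<^sub>v w - lo \<cdot>\<^sub>v w"
        unfolding C_def using M by (subst minus_mult_distrib_mat_vec[of _ n n]) (auto simp: smult_one_mat_vec)
      have sC: "symm C" using M unfolding C_def symm_def by (simp add: transpose_minus[of _ n n] transpose_smult_one)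
      have fC: "\<And>w. w \<in> carrier_vec n \<Longrightarrow> 0 \<le> w \<bullet> (C *\<^sub>v w) \<and> w \<bullet> (C *\<^sub>v w) \<le> 1 * (w \<bullet> w)"
      proof -
        fix w :: "real vec" assume w: "w \<in> carrier_vec n"
        have "w \<bullet> (C *\<^sub>v w) = w \<bullet> (M *\<^sub>v w) - lo * (w \<bullet> w)" using w M by (simp add: Cv scalar_prod_minus_distrib[of _ n])
        then show "0 \<le> w \<bullet> (C *\<^sub>v w) \<and> w \<bullet> (C *\<^sub>v w) \<le> 1 * (w \<bullet> w)" using form[OF w] True sq_nonneg[of w] by auto
      qed
      have "(C *\<^sub>v y) \<bullet> (C *\<^sub>v y) \<le> 1 * (y \<bullet> (C *\<^sub>v y))" by (rule psd_bound[OF Cc sC _ fC y]) simp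
      moreover have "y \<bullet> (C *\<^sub>v y) = 0" using fC[OF y] y M True form[OF y] by (simp add: Cv scalar_prod_minus_distrib[of _ n])
      ultimately have "(C *\<^sub>v y) \<bullet> (C *\<^sub>v y) = 0" using sq_nonneg[of "C *\<^sub>v y"] by linarith
      then have "C *\<^sub>v y = 0\<^sub>v n" using sq_zero[of "C *\<^sub>v y" n] Cc y by auto
      then have "(C *\<^sub>v y) $ s = 0" using s by simp
      then have "(M *\<^sub>v y) $ s - lo * y $ s = 0" using Cv[OF y] s y M by simp
      then have "y $ s = 0" using eq s t st lo by simp
      moreover have "0 \<le> \<tau>" using tau lo by (smt (verit) divide_pos_pos)
      moreover have "0 \<le> \<rho>" unfolding \<rho>_def by simp
      ultimately show ?thesis by simp
    next
      case False
      then have lh: "lo < hi" using lo by simp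
      have sk1': "sk > 1" unfolding sk_def \<kappa>_def using lo lh by simp
      have qpos: "q > 0" unfolding q_def using sk1' by simp
      define k where "k = (d - 1) div H"
      define E where "E = q^(k+1)*(1+sk)^2/(2*sk^2*lo)"
      define L where "L = [:-(lo+hi)/(hi-lo), 2/(hi-lo):]"
      obtain p G c where pG: "degree p \<le> k" "c \<ge> 0"
        "Polynomial.smult (E^2) ([:0,1:]*[:0,1:]) - (1 - [:0,1:]*p)*(1 - [:0,1:]*p) = Polynomial.smult c (G*G - (L*G)*(L*G))"
        using cheb_poly[OF lo(1) lh, of k] unfolding E_def L_def sk_def \<kappa>_def q_def by blast
      define r where "r = 1 - [:0,1:]*p"
      have et: "unit_vec n t \<in> carrier_vec n" by simp
      have dec: "y = evalv r M y + \<beta> \<cdot>\<^sub>v evalv p M (unit_vec n t)"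
      proof -
        have "y = evalv (r + [:0,1:]*p) M y" unfolding r_def using evalv_one[OF M(1) y] by simp
        also have "\<dots> = evalv r M y + evalv (p * [:0,1:]) M y" by (simp add: evalv_add[OF M(1) y] mult.commute)
        also have "evalv (p * [:0,1:]) M y = evalv p M (M *\<^sub>v y)" unfolding evalv_mult[OF M(1) y] evalv_x[OF M(1) y] ..
        also have "\<dots> = \<beta> \<cdot>\<^sub>v evalv p M (unit_vec n t)" unfolding eq by (rule evalv_lin_smult[OF M(1) et])
        finally show ?thesis .
      qed
      have near: "near (degree p * H) t (evalv p M (unit_vec n t))"
        by (rule evalv_near[OF M(1) M(3) et]) (auto simp: near_def unit_vec_def)
      have dk: "degree p * H < d"
      proof -
        have "degree p * H \<le> k * H" using pG(1) by simp
        also have "k * H \<le> d - 1" unfolding k_def by (simp add: div_times_less_eq_dividend)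
        finally show ?thesis using False \<open>d \<noteq> 0\<close> by linarith
      qed
      have "s + degree p * H < t \<or> t + degree p * H < s" using dk unfolding d_def by linarith
      then have z: "evalv p M (unit_vec n t) $ s = 0" using near s M unfolding near_def by auto
      have ysr: "y $ s = evalv r M y $ s" using arg_cong[OF dec, of "\<lambda>v. v $ s"] z s y M by simp
      define u where "u = evalv G M y"
      have u: "u \<in> carrier_vec n" unfolding u_def using M y by simp
      have Lbound: "evalv L M u \<bullet> evalv L M u \<le> u \<bullet> u"
      proof -
        define c0 where "c0 = -(lo+hi)/(hi-lo)"
        define c1 where "c1 = 2/(hi-lo)"
        define Cm where "Cm = c0 \<cdot>\<^sub>m 1\<^sub>m n + c1 \<cdot>\<^sub>m M"
        have Cc: "Cm \<in> carrier_mat n n" unfolding Cm_def using M by auto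
        have Cv0: "\<And>w. w \<in> carrier_vec n \<Longrightarrow> Cm *\<^sub>v w = c0 \<cdot>\<^sub>v w + c1 \<cdot>\<^sub>v (M *\<^sub>v w)"
          unfolding Cm_def using M
            by (subst add_mult_distrib_mat_vec[of _ n n]) (auto simp: smult_one_mat_vec intro!: eq_vecI)
        have Cv: "\<And>w. w \<in> carrier_vec n \<Longrightarrow> Cm *\<^sub>v w = evalv L M w"
        proof -
          fix w :: "real vec" assume w: "w \<in> carrier_vec n"
          have "Cm *\<^sub>v w = c0 \<cdot>\<^sub>v w + c1 \<cdot>\<^sub>v (M *\<^sub>v w)" by (rule Cv0[OF w])
          also have "\<dots> = evalv L M w" unfolding L_def c0_def c1_def using M w
            by (simp add: evalv_pCons[OF M(1) w] evalv_const[OF M(1) w] mult_mat_vec[OF M(1) w])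
          finally show "Cm *\<^sub>v w = evalv L M w" .
        qed
        have sC: "symm Cm" using M unfolding Cm_def symm_def
          by (simp add: transpose_add[of _ n n] transpose_smult_one transpose_smult_r)
        have fC: "\<And>w. w \<in> carrier_vec n \<Longrightarrow> \<bar>w \<bullet> (Cm *\<^sub>v w)\<bar> \<le> 1 * (w \<bullet> w)"
        proof -
          fix w :: "real vec" assume w: "w \<in> carrier_vec n"
          have e: "w \<bullet> (Cm *\<^sub>v w) = c0 * (w \<bullet> w) + c1 * (w \<bullet> (M *\<^sub>v w))"
            unfolding Cv0[OF w] using M w by (simp add: scalar_prod_add_distrib[of _ n])
          have hl: "hi - lo > 0" using lh by simp
          have ww: "w \<bullet> w \<ge> 0" by (rule sq_nonneg)
          define Q where "Q = w \<bullet> (M *\<^sub>v w)"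
          have f: "lo * (w \<bullet> w) \<le> Q" "Q \<le> hi * (w \<bullet> w)" using form[OF w] unfolding Q_def by auto
          have a0: "c0 * (hi - lo) = -(lo+hi)" "c1 * (hi - lo) = 2" unfolding c0_def c1_def using hl by (auto simp: field_simps)
          have "(c0 * (w \<bullet> w) + c1 * Q) * (hi - lo) = (c0 * (hi - lo)) * (w \<bullet> w) + (c1 * (hi - lo)) * Q"
            by (simp add: algebra_simps)
          also have "\<dots> = 2 * Q - (lo + hi) * (w \<bullet> w)" unfolding a0 by (simp add: algebra_simps)
          finally have "(c0 * (w \<bullet> w) + c1 * Q) * (hi - lo) = 2 * Q - (lo + hi) * (w \<bullet> w)" .
          then have "c0 * (w \<bullet> w) + c1 * Q = (2 * Q - (lo + hi) * (w \<bullet> w)) / (hi - lo)"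
            using hl by (simp add: eq_divide_eq)
          moreover have "\<bar>2 * Q - (lo + hi) * (w \<bullet> w)\<bar> \<le> (hi - lo) * (w \<bullet> w)" using f by (simp add: abs_le_iff algebra_simps)
          ultimately have "\<bar>c0 * (w \<bullet> w) + c1 * Q\<bar> \<le> (w \<bullet> w)" using hl by (simp add: abs_div divide_le_eq mult.commute)
          then show "\<bar>w \<bullet> (Cm *\<^sub>v w)\<bar> \<le> 1 * (w \<bullet> w)" unfolding e Q_def by simp
        qed
        have "(Cm *\<^sub>v u) \<bullet> (Cm *\<^sub>v u) \<le> 1^2 * (u \<bullet> u)" by (rule polarization[OF Cc sC _ fC u]) simp
        then show ?thesis unfolding Cv[OF u] by simp
      qed
      have selfsq: "\<And>P. y \<bullet> evalv (P * P) M y = evalv P M y \<bullet> evalv P M y"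
      proof -
        fix P
        have "y \<bullet> evalv (P * P) M y = y \<bullet> evalv P M (evalv P M y)" by (simp add: evalv_mult[OF M(1) y])
        also have "\<dots> = evalv P M y \<bullet> evalv P M y" by (rule evalv_selfadj[OF M(1) M(2) y]) (use M y in simp)
        finally show "y \<bullet> evalv (P * P) M y = evalv P M y \<bullet> evalv P M y" .
      qed
      have lhs: "y \<bullet> evalv (Polynomial.smult (E^2) ([:0,1:]*[:0,1:]) - r * r) M y = E^2 * \<beta>^2 - evalv r M y \<bullet> evalv r M y"
      proof -
        have "y \<bullet> evalv ([:0,1:]*[:0,1:]) M y = (M *\<^sub>v y) \<bullet> (M *\<^sub>v y)"
          using selfsq[of "[:0,1:]"] by (simp add: evalv_x[OF M(1) y])
        moreover have "evalv (Polynomial.smult (E^2) ([:0,1:]*[:0,1:]) - r * r) M y = E^2 \<cdot>\<^sub>v evalv ([:0,1:]*[:0,1:]) M y - evalv (r*r) M y"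
          by (simp only: evalv_diff[OF M(1) y] evalv_smult[OF M(1) y])
        ultimately show ?thesis using M y My selfsq[of r]
          by (simp add: scalar_prod_minus_distrib[of _ n])
      qed
      have rhs: "y \<bullet> evalv (Polynomial.smult c (G*G - (L*G)*(L*G))) M y = c * (u \<bullet> u - evalv L M u \<bullet> evalv L M u)"
      proof -
        have "evalv (L*G) M y = evalv L M u" unfolding u_def by (rule evalv_mult[OF M(1) y])
        moreover have "evalv (Polynomial.smult c (G*G - (L*G)*(L*G))) M y = c \<cdot>\<^sub>v (evalv (G*G) M y - evalv ((L*G)*(L*G)) M y)"
          by (simp only: evalv_diff[OF M(1) y] evalv_smult[OF M(1) y])
        ultimately show ?thesis using M y selfsq[of G] selfsq[of "L*G"] unfolding u_def[symmetric]
          by (simp add: scalar_prod_minus_distrib[of _ n])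
      qed
      have "0 \<le> c * (u \<bullet> u - evalv L M u \<bullet> evalv L M u)" using pG(2) Lbound by simp
      then have "evalv r M y \<bullet> evalv r M y \<le> E^2 * \<beta>^2"
        using lhs rhs pG(3) unfolding r_def by simp
      moreover have "(y $ s)^2 \<le> evalv r M y \<bullet> evalv r M y" unfolding ysr using entry_sq_le[of s "evalv r M y"] s y M by simp
      ultimately have "(y $ s)^2 \<le> (E * \<bar>\<beta>\<bar>)^2" by (simp add: power_mult_distrib)
      moreover have Enn: "E \<ge> 0" unfolding E_def using qpos lo by simp
      ultimately have ysE: "\<bar>y $ s\<bar> \<le> E * \<bar>\<beta>\<bar>"
      proof -
        assume a: "(y $ s)^2 \<le> (E * \<bar>\<beta>\<bar>)^2" "E \<ge> 0"
        have "\<bar>y $ s\<bar>^2 \<le> (E * \<bar>\<beta>\<bar>)^2" using a(1) by simp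
        then show ?thesis by (rule power2_le_imp_le) (use a(2) in simp)
      qed
      have Etau: "E \<le> \<tau> * q^(k+1)"
      proof -
        have sk2: "sk^2 = \<kappa>" unfolding sk_def using k1 by simp
        have "E = q^(k+1) * ((1/lo) * ((1+sk)^2/(2*\<kappa>)))" unfolding E_def sk2 by (simp add: field_simps)
        also have "\<dots> \<le> q^(k+1) * \<tau>"
        proof -
          have "(1/lo) * ((1+sk)^2/(2*\<kappa>)) \<le> (1/lo) * max 1 ((1+sk)^2/(2*\<kappa>))"
            by (rule mult_left_mono[OF max.cobounded2]) (use lo in simp)
          then show ?thesis unfolding \<tau>_def by (rule mult_left_mono) (use qpos in simp)
        qed
        finally show ?thesis by (simp add: mult.commute)
      qed
      have qrho: "q^(k+1) \<le> \<rho> ^ d"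
      proof -
        have "d \<le> H * (k + 1)"
        proof -
          have e: "H * ((d - 1) div H) + (d - 1) mod H = d - 1" by (rule mult_div_mod_eq)
          moreover have "(d - 1) mod H < H" using H by simp
          ultimately have "d \<le> H * ((d - 1) div H) + H" using \<open>d \<noteq> 0\<close> by linarith
          then show ?thesis unfolding k_def by (simp add: algebra_simps)
        qed
        then have "real d \<le> real (k + 1) * real H" by (metis of_nat_le_iff of_nat_mult mult.commute)
        then have dH: "real d / real H \<le> real (k + 1)" using H by (simp add: divide_le_eq)
        have "q^(k+1) = q powr real (k+1)" using qpos by (rule powr_realpow[symmetric])
        also have "\<dots> \<le> q powr (real d / real H)" by (rule powr_mono'[OF dH]) (use q0 in auto)
        also have "q powr (real d / real H) = (q powr (1 / real H)) powr real d" by (simp add: powr_powr)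
        also have "\<dots> = \<rho> ^ d" unfolding \<rho>_def using qpos by (simp add: powr_realpow)
        finally show ?thesis .
      qed
      have tnn: "\<tau> \<ge> 0" using tau lo by (smt (verit) divide_pos_pos)
      have "E \<le> \<tau> * \<rho> ^ d" using Etau mult_left_mono[OF qrho tnn] by linarith
      then have "E * \<bar>\<beta>\<bar> \<le> \<tau> * \<rho> ^ d * \<bar>\<beta>\<bar>" by (rule mult_right_mono) simp
      then show ?thesis using ysE by (simp add: mult_ac)
    qed
  qed
  then show ?thesis unfolding \<tau>_def \<rho>_def d_def q_def sk_def \<kappa>_def .
qed


lemma sum_blocks: fixes n K :: nat shows "(\<Sum>u<n*K. f u) = (\<Sum>j<n. \<Sum>i<K. f (j*K + i) :: real)"
proof -
  have "(\<Sum>u<n*K. f u) = (\<Sum>j<n. sum f {j*K..<j*K+K})" using sum.nat_group[of f K n] by simp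
  also have "\<dots> = (\<Sum>j<n. \<Sum>i<K. f (j*K + i))"
  proof (rule sum.cong[OF refl])
    fix j
    have "sum f {0 + j*K..<K + j*K} = (\<Sum>i\<in>{0..<K}. f (i + j*K))" by (rule sum.shift_bounds_nat_ivl)
    then show "sum f {j*K..<j*K+K} = (\<Sum>i<K. f (j*K + i))" by (simp add: add.commute lessThan_atLeast0)
  qed
  finally show ?thesis .
qed

lemma eig_finite: assumes A: "(A::real mat) \<in> carrier_mat n n" shows "finite {x. eigenvalue A x}"
proof -
  have "char_poly A \<noteq> 0" using degree_monic_char_poly[OF A] by (metis coeff_0 zero_neq_one)
  then have "finite {x. poly (char_poly A) x = 0}" by (rule poly_roots_finite)
  then show ?thesis using eigenvalue_root_char_poly[OF A] by simp
qed

lemma eig_neg: assumes A: "(A::real mat) \<in> carrier_mat n n" and nd: "negative_definite A" and e: "eigenvalue A k"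
  shows "k < 0"
proof -
  obtain v where v: "v \<in> carrier_vec n" "v \<noteq> 0\<^sub>v n" "A *\<^sub>v v = k \<cdot>\<^sub>v v"
    using e A unfolding eigenvalue_def eigenvector_def by auto
  have "v \<bullet> (A *\<^sub>v v) < 0" using nd v A unfolding negative_definite_def by auto
  then have "k * (v \<bullet> v) < 0" using v by simp
  moreover have "v \<bullet> v > 0" using sq_nonneg[of v] sq_zero[OF v(1)] v(2) by fastforce
  ultimately show ?thesis by (simp add: mult_less_0_iff)
qed

lemma rayleigh_bounds: assumes A: "(A::real mat) \<in> carrier_mat n n" "symm A" and n: "n > 0"
  shows "{x. eigenvalue A x} \<noteq> {}"
    and "\<And>v. v \<in> carrier_vec n \<Longrightarrow> v \<bullet> (A *\<^sub>v v) \<le> lambda_max A * (v \<bullet> v)"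
    and "\<And>v. v \<in> carrier_vec n \<Longrightarrow> lambda_min A * (v \<bullet> v) \<le> v \<bullet> (A *\<^sub>v v)"
proof -
  obtain \<mu> where mu: "eigenvalue A \<mu>" "\<And>v. v\<in>carrier_vec n \<Longrightarrow> v \<bullet> (A *\<^sub>v v) \<le> \<mu> * (v \<bullet> v)"
    using rayleigh_sup[OF A n] by blast
  show "{x. eigenvalue A x} \<noteq> {}" using mu by blast
  have fin: "finite {x. eigenvalue A x}" by (rule eig_finite[OF A(1)])
  have ml: "\<mu> \<le> lambda_max A" unfolding lambda_max_def using fin mu by (intro Max_ge) auto
  show "\<And>v. v \<in> carrier_vec n \<Longrightarrow> v \<bullet> (A *\<^sub>v v) \<le> lambda_max A * (v \<bullet> v)"
  proof -
    fix v :: "real vec" assume v: "v \<in> carrier_vec n"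
    have "\<mu> * (v \<bullet> v) \<le> lambda_max A * (v \<bullet> v)" by (rule mult_right_mono[OF ml sq_nonneg])
    then show "v \<bullet> (A *\<^sub>v v) \<le> lambda_max A * (v \<bullet> v)" using mu(2)[OF v] by linarith
  qed
  have mA: "- A \<in> carrier_mat n n" "symm (- A)" using A unfolding symm_def by (auto simp: transpose_uminus)
  obtain \<nu> where nu: "eigenvalue (- A) \<nu>" "\<And>v. v\<in>carrier_vec n \<Longrightarrow> v \<bullet> ((- A) *\<^sub>v v) \<le> \<nu> * (v \<bullet> v)"
    using rayleigh_sup[OF mA n] by blast
  have "eigenvalue A (- \<nu>)"
  proof -
    obtain v where v: "v \<in> carrier_vec n" "v \<noteq> 0\<^sub>v n" "(- A) *\<^sub>v v = \<nu> \<cdot>\<^sub>v v"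
      using nu(1) mA unfolding eigenvalue_def eigenvector_def by auto
    have "A *\<^sub>v v = (- \<nu>) \<cdot>\<^sub>v v"
    proof (rule eq_vecI)
      fix i assume i: "i < dim_vec ((- \<nu>) \<cdot>\<^sub>v v)"
      have i': "i < n" using i v by simp
      have "((- A) *\<^sub>v v) $ i = (\<nu> \<cdot>\<^sub>v v) $ i" using arg_cong[OF v(3), of "\<lambda>x. x $ i"] .
      moreover have "((- A) *\<^sub>v v) $ i = - ((A *\<^sub>v v) $ i)" using A v(1) i' by simp
      ultimately show "(A *\<^sub>v v) $ i = ((- \<nu>) \<cdot>\<^sub>v v) $ i" using i' v by simp
    qed (use v A in simp)
    then show ?thesis unfolding eigenvalue_def eigenvector_def using v A by auto
  qed
  then have ml2: "lambda_min A \<le> - \<nu>" unfolding lambda_min_def using fin by (intro Min_le) auto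
  show "\<And>v. v \<in> carrier_vec n \<Longrightarrow> lambda_min A * (v \<bullet> v) \<le> v \<bullet> (A *\<^sub>v v)"
  proof -
    fix v :: "real vec" assume v: "v \<in> carrier_vec n"
    have e: "v \<bullet> ((- A) *\<^sub>v v) = - (v \<bullet> (A *\<^sub>v v))" using A v by simp
    have "lambda_min A * (v \<bullet> v) \<le> (- \<nu>) * (v \<bullet> v)" by (rule mult_right_mono[OF ml2 sq_nonneg])
    then show "lambda_min A * (v \<bullet> v) \<le> v \<bullet> (A *\<^sub>v v)" using nu(2)[OF v] e by linarith
  qed
qed


definition vecm :: "nat \<Rightarrow> real mat \<Rightarrow> real vec" where
  "vecm K X = vec (K*K) (\<lambda>u. X $$ (u mod K, u div K))"
definition unvec :: "nat \<Rightarrow> real vec \<Rightarrow> real mat" where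
  "unvec K w = mat K K (\<lambda>(i,j). w $ (j*K + i))"
definition Mp :: "nat \<Rightarrow> real mat \<Rightarrow> real mat" where
  "Mp K A = mat (K*K) (K*K) (\<lambda>(u,v). - ((if u div K = v div K then A $$ (u mod K, v mod K) else 0)
      + (if u mod K = v mod K then A $$ (v div K, u div K) else 0)))"

lemma jk_less: "i < K \<Longrightarrow> j < K \<Longrightarrow> j*K + i < K*(K::nat)"
proof -
  assume i: "i < K" and j: "j < K"
  have "j*K + i < j*K + K" using i by simp
  also have "\<dots> = (j+1)*K" by simp
  also have "\<dots> \<le> K*K" using j by (intro mult_le_mono1) simp
  finally show ?thesis .
qed

lemma jk_mod: "i < K \<Longrightarrow> (j*K + i) mod K = (i::nat)" by simp
lemma jk_div: "i < K \<Longrightarrow> (j*K + i) div K = (j::nat)" by simp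

lemma u_mod_div: "u < K*(K::nat) \<Longrightarrow> u mod K < K \<and> u div K < K"
  by (metis less_mult_imp_div_less mod_less_divisor mult_eq_0_iff bot_nat_0.not_eq_extremum less_nat_zero_code)

lemma vecm_carrier[simp]: "vecm K X \<in> carrier_vec (K*K)" unfolding vecm_def by simp
lemma vecm_dim[simp]: "dim_vec (vecm K X) = K*K" unfolding vecm_def by simp
lemma vecm_index[simp]: "u < K*K \<Longrightarrow> vecm K X $ u = X $$ (u mod K, u div K)" unfolding vecm_def by simp

lemma vecm_unvec: assumes w: "w \<in> carrier_vec (K*K)" shows "vecm K (unvec K w) = w"
proof (rule eq_vecI)
  fix u assume "u < dim_vec w"
  then have u: "u < K*K" using w by simp
  then have "u mod K < K" "u div K < K" using u_mod_div by auto
  then show "vecm K (unvec K w) $ u = w $ u" using u unfolding unvec_def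
    by (simp add: mult.commute[of "u div K"] )
qed (use w in simp)

lemma unvec_carrier[simp]: "unvec K w \<in> carrier_mat K K" unfolding unvec_def by simp

lemma sum_vecm: fixes K :: nat shows "(\<Sum>u\<in>{0..<K*K}. f u) = (\<Sum>j<K. \<Sum>i<K. f (j*K + i) :: real)"
  using sum_blocks[where n=K and K=K and f=f] by (simp add: lessThan_atLeast0)

lemma frob: assumes X: "X \<in> carrier_mat K K" and Y: "Y \<in> carrier_mat K K"
  shows "vecm K X \<bullet> vecm K Y = (\<Sum>j<K. \<Sum>i<K. X $$ (i,j) * Y $$ (i,j))"
proof -
  have "vecm K X \<bullet> vecm K Y = (\<Sum>u\<in>{0..<K*K}. X $$ (u mod K, u div K) * Y $$ (u mod K, u div K))"
    unfolding scalar_prod_def by (intro sum.cong) auto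
  also have "\<dots> = (\<Sum>j<K. \<Sum>i<K. X $$ (i,j) * Y $$ (i,j))"
    unfolding sum_vecm by (intro sum.cong refl) (simp add: jk_mod jk_div)
  finally show ?thesis .
qed

lemma hd1: fixes K :: nat shows "j0 < K \<Longrightarrow> (\<Sum>j<K. \<Sum>i<K. (if j0 = j then F i j else 0)) = (\<Sum>i<K. F i j0 :: real)"
proof -
  assume j0: "j0 < K"
  have "(\<Sum>j<K. \<Sum>i<K. (if j0 = j then F i j else 0)) = (\<Sum>j<K. if j0 = j then (\<Sum>i<K. F i j) else 0)"
    by (intro sum.cong refl) auto
  also have "\<dots> = (\<Sum>i<K. F i j0)" using j0 by (subst sum.delta') auto
  finally show ?thesis .
qed

lemma hd2: fixes K :: nat assumes "i0 < K" shows " (\<Sum>j<K. \<Sum>i<K. (if i0 = i then G i j else 0)) = (\<Sum>j<K. G i0 j :: real)"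
proof (intro sum.cong refl)
  fix x
  show "(\<Sum>i<K. if i0 = i then G i x else 0) = G i0 x" using assms by (subst sum.delta') auto
qed

lemma Mp_carrier[simp]: "Mp K A \<in> carrier_mat (K*K) (K*K)" unfolding Mp_def by simp

lemma Mp_vecm: assumes A: "A \<in> carrier_mat K K" and X: "X \<in> carrier_mat K K"
  shows "Mp K A *\<^sub>v vecm K X = - vecm K (A * X + X * A)"
proof (rule eq_vecI)
  fix u assume "u < dim_vec (- vecm K (A * X + X * A))"
  then have u: "u < K*K" by simp
  define i0 where "i0 = u mod K"
  define j0 where "j0 = u div K"
  have ij0: "i0 < K" "j0 < K" using u_mod_div[OF u] unfolding i0_def j0_def by auto
  have "(Mp K A *\<^sub>v vecm K X) $ u = (\<Sum>v\<in>{0..<K*K}. Mp K A $$ (u,v) * X $$ (v mod K, v div K))"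
    using u unfolding Mp_def by (auto simp: scalar_prod_def intro!: sum.cong)
  also have "\<dots> = (\<Sum>j<K. \<Sum>i<K. - ((if j0 = j then A $$ (i0, i) * X $$ (i,j) else 0) + (if i0 = i then A $$ (j, j0) * X $$ (i,j) else 0)))"
    unfolding sum_vecm
  proof (intro sum.cong refl)
    fix j i assume j: "j \<in> {..<K}" and i: "i \<in> {..<K}"
    have "j*K + i < K*K" using jk_less i j by simp
    then show "Mp K A $$ (u, j*K + i) * X $$ ((j*K + i) mod K, (j*K + i) div K) =
        - ((if j0 = j then A $$ (i0, i) * X $$ (i,j) else 0) + (if i0 = i then A $$ (j, j0) * X $$ (i,j) else 0))"
      using u i unfolding Mp_def i0_def j0_def by (simp add: jk_mod jk_div algebra_simps)
  qed
  also have "\<dots> = - ((\<Sum>i<K. A $$ (i0, i) * X $$ (i,j0)) + (\<Sum>j<K. A $$ (j, j0) * X $$ (i0,j)))"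
  proof -
    have "(\<Sum>j<K. \<Sum>i<K. - ((if j0 = j then A $$ (i0, i) * X $$ (i,j) else 0) + (if i0 = i then A $$ (j, j0) * X $$ (i,j) else 0)))
      = - (\<Sum>j<K. \<Sum>i<K. (if j0 = j then A $$ (i0, i) * X $$ (i,j) else 0)) - (\<Sum>j<K. \<Sum>i<K. (if i0 = i then A $$ (j, j0) * X $$ (i,j) else 0))"
      by (simp only: sum_negf sum.distrib minus_add_distrib sum_subtractf diff_conv_add_uminus)
    then show ?thesis by (simp only: hd1[OF ij0(2)] hd2[OF ij0(1)])
  qed
  also have "\<dots> = (- vecm K (A * X + X * A)) $ u"
  proof -
    have e1: "(- vecm K (A * X + X * A)) $ u = - ((A * X + X * A) $$ (i0, j0))" using u unfolding i0_def j0_def by simp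
    have e2: "(A * X + X * A) $$ (i0, j0) = (\<Sum>i<K. A $$ (i0, i) * X $$ (i,j0)) + (\<Sum>j<K. A $$ (j, j0) * X $$ (i0,j))"
      using A X ij0 by (simp add: scalar_prod_def lessThan_atLeast0 mult.commute)
    show ?thesis unfolding e1 e2 by simp
  qed
  finally show "(Mp K A *\<^sub>v vecm K X) $ u = (- vecm K (A * X + X * A)) $ u" .
qed (simp add: Mp_def)


lemma vecm_add: "X \<in> carrier_mat K K \<Longrightarrow> Y \<in> carrier_mat K K \<Longrightarrow> vecm K (X + Y) = vecm K X + vecm K Y"
proof (intro eq_vecI)
  fix u assume X: "X \<in> carrier_mat K K" and Y: "Y \<in> carrier_mat K K" and "u < dim_vec (vecm K X + vecm K Y)"
  then have u: "u < K*K" by simp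
  then show "vecm K (X + Y) $ u = (vecm K X + vecm K Y) $ u" using u_mod_div[OF u] X Y by simp
qed simp

lemma symm_entry: "A \<in> carrier_mat K K \<Longrightarrow> symm A \<Longrightarrow> a < K \<Longrightarrow> b < K \<Longrightarrow> A $$ (a,b) = A $$ (b,a)"
  unfolding symm_def by (metis index_transpose_mat(1) carrier_matD)

lemma quad_Mp: assumes A: "A \<in> carrier_mat K K" "symm A" and w: "w \<in> carrier_vec (K*K)"
  defines "W \<equiv> unvec K w"
  shows "w \<bullet> (Mp K A *\<^sub>v w) = - ((\<Sum>j<K. col W j \<bullet> (A *\<^sub>v col W j)) + (\<Sum>i<K. row W i \<bullet> (A *\<^sub>v row W i)))"
    and "w \<bullet> w = (\<Sum>j<K. col W j \<bullet> col W j)"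
    and "w \<bullet> w = (\<Sum>i<K. row W i \<bullet> row W i)"
proof -
  have Wc: "W \<in> carrier_mat K K" unfolding W_def by simp
  have wW: "w = vecm K W" unfolding W_def using vecm_unvec[OF w] by simp
  have AW: "A * W \<in> carrier_mat K K" "W * A \<in> carrier_mat K K" using A Wc by auto
  have t1: "vecm K W \<bullet> vecm K (A * W) = (\<Sum>j<K. col W j \<bullet> (A *\<^sub>v col W j))"
    unfolding frob[OF Wc AW(1)]
  proof (intro sum.cong refl)
    fix j assume j: "j \<in> {..<K}"
    have "col W j \<bullet> (A *\<^sub>v col W j) = (\<Sum>i\<in>{0..<K}. col W j $ i * (A *\<^sub>v col W j) $ i)"
      unfolding scalar_prod_def[of "col W j"] using A by simp
    also have "\<dots> = (\<Sum>i<K. W $$ (i, j) * (A * W) $$ (i, j))"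
      unfolding lessThan_atLeast0 using j A Wc by (intro sum.cong refl) auto
    finally show "(\<Sum>i<K. W $$ (i, j) * (A * W) $$ (i, j)) = col W j \<bullet> (A *\<^sub>v col W j)" by simp
  qed
  have t2: "vecm K W \<bullet> vecm K (W * A) = (\<Sum>i<K. row W i \<bullet> (A *\<^sub>v row W i))"
  proof -
    have sw: "(\<Sum>j<K. \<Sum>i<K. W $$ (i, j) * (W * A) $$ (i, j)) = (\<Sum>i<K. \<Sum>j<K. W $$ (i, j) * (W * A) $$ (i, j))"
      by (rule sum.swap)
    show ?thesis unfolding frob[OF Wc AW(2)] sw
    proof (intro sum.cong refl)
      fix i assume i: "i \<in> {..<K}"
      have rc: "\<And>j. j < K \<Longrightarrow> row W i \<bullet> col A j = row A j \<bullet> row W i"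
      proof -
        fix j assume j: "j < K"
        have "col A j = row A j"
          using A j by (intro eq_vecI) (auto simp: symm_entry)
        moreover have "row W i \<bullet> row A j = row A j \<bullet> row W i"
          by (rule comm_scalar_prod[of _ K]) (use A Wc in auto)
        ultimately show "row W i \<bullet> col A j = row A j \<bullet> row W i" by simp
      qed
      have "row W i \<bullet> (A *\<^sub>v row W i) = (\<Sum>j\<in>{0..<K}. row W i $ j * (A *\<^sub>v row W i) $ j)"
        unfolding scalar_prod_def[of "row W i"] using A by simp
      also have "\<dots> = (\<Sum>j<K. W $$ (i, j) * (W * A) $$ (i, j))"
        unfolding lessThan_atLeast0 using i A Wc rc by (intro sum.cong refl) auto
      finally show "(\<Sum>j<K. W $$ (i, j) * (W * A) $$ (i, j)) = row W i \<bullet> (A *\<^sub>v row W i)" by simp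
    qed
  qed
  have m1: "Mp K A *\<^sub>v vecm K W = - (vecm K (A * W) + vecm K (W * A))"
    unfolding Mp_vecm[OF A(1) Wc] vecm_add[OF AW] ..
  have "w \<bullet> (Mp K A *\<^sub>v w) = vecm K W \<bullet> (Mp K A *\<^sub>v vecm K W)" by (simp only: wW[symmetric])
  also have "\<dots> = vecm K W \<bullet> (- (vecm K (A * W) + vecm K (W * A)))" unfolding m1 ..
  also have "\<dots> = - (vecm K W \<bullet> (vecm K (A * W) + vecm K (W * A)))"
    by (rule scalar_prod_uminus_right) simp
  also have "vecm K W \<bullet> (vecm K (A * W) + vecm K (W * A)) = vecm K W \<bullet> vecm K (A * W) + vecm K W \<bullet> vecm K (W * A)"
    by (rule scalar_prod_add_distrib[of _ "K*K"]) auto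
  finally show "w \<bullet> (Mp K A *\<^sub>v w) = - ((\<Sum>j<K. col W j \<bullet> (A *\<^sub>v col W j)) + (\<Sum>i<K. row W i \<bullet> (A *\<^sub>v row W i)))"
    unfolding t1 t2 .
  have ww: "w \<bullet> w = (\<Sum>j<K. \<Sum>i<K. W $$ (i,j) * W $$ (i,j))"
  proof -
    have "w \<bullet> w = vecm K W \<bullet> vecm K W" by (simp only: wW[symmetric])
    then show ?thesis unfolding frob[OF Wc Wc] .
  qed
  have cc: "\<And>j. j < K \<Longrightarrow> col W j \<bullet> col W j = (\<Sum>i<K. W $$ (i,j) * W $$ (i,j))"
    using Wc unfolding scalar_prod_def lessThan_atLeast0 by (auto intro!: sum.cong)
  have rr: "\<And>i. i < K \<Longrightarrow> row W i \<bullet> row W i = (\<Sum>j<K. W $$ (i,j) * W $$ (i,j))"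
    using Wc unfolding scalar_prod_def lessThan_atLeast0 by (auto intro!: sum.cong)
  show "w \<bullet> w = (\<Sum>j<K. col W j \<bullet> col W j)" unfolding ww by (intro sum.cong refl) (simp add: cc)
  have sw: "(\<Sum>j<K. \<Sum>i<K. W $$ (i,j) * W $$ (i,j)) = (\<Sum>i<K. \<Sum>j<K. W $$ (i,j) * W $$ (i,j))" by (rule sum.swap)
  show "w \<bullet> w = (\<Sum>i<K. row W i \<bullet> row W i)" unfolding ww sw
    by (intro sum.cong refl) (simp add: rr)
qed


lemma form_Mp: assumes A: "A \<in> carrier_mat K K" "symm A" and K: "K > 0" and w: "w \<in> carrier_vec (K*K)"
  shows "(-2 * lambda_max A) * (w \<bullet> w) \<le> w \<bullet> (Mp K A *\<^sub>v w) \<and> w \<bullet> (Mp K A *\<^sub>v w) \<le> (-2 * lambda_min A) * (w \<bullet> w)"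
proof -
  define W where "W = unvec K w"
  have Wc: "W \<in> carrier_mat K K" unfolding W_def by simp
  note q = quad_Mp[OF A w, folded W_def]
  note rb = rayleigh_bounds[OF A K]
  have c1: "(\<Sum>j<K. col W j \<bullet> (A *\<^sub>v col W j)) \<le> lambda_max A * (w \<bullet> w)"
    unfolding q(2) sum_distrib_left by (rule sum_mono) (use rb(2) Wc in simp)
  have c2: "(\<Sum>i<K. row W i \<bullet> (A *\<^sub>v row W i)) \<le> lambda_max A * (w \<bullet> w)"
    unfolding q(3) sum_distrib_left by (rule sum_mono) (use rb(2) Wc in simp)
  have c3: "lambda_min A * (w \<bullet> w) \<le> (\<Sum>j<K. col W j \<bullet> (A *\<^sub>v col W j))"
    unfolding q(2) sum_distrib_left by (rule sum_mono) (use rb(3) Wc in simp)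
  have c4: "lambda_min A * (w \<bullet> w) \<le> (\<Sum>i<K. row W i \<bullet> (A *\<^sub>v row W i))"
    unfolding q(3) sum_distrib_left by (rule sum_mono) (use rb(3) Wc in simp)
  show ?thesis unfolding q(1) using c1 c2 c3 c4 by linarith
qed

lemma symm_Mp: assumes A: "A \<in> carrier_mat K K" "symm A" shows "symm (Mp K A)"
  unfolding symm_def
proof (rule eq_matI)
  fix u v assume u: "u < dim_row (Mp K A)" and v: "v < dim_col (Mp K A)"
  then have u': "u < K*K" and v': "v < K*K" by (auto simp: Mp_def)
  note um = u_mod_div[OF u'] and vm = u_mod_div[OF v']
  show "transpose_mat (Mp K A) $$ (u, v) = Mp K A $$ (u, v)"
  proof -
    have e1: "A $$ (v mod K, u mod K) = A $$ (u mod K, v mod K)" using symm_entry[OF A] um vm by blast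
    have e2: "A $$ (u div K, v div K) = A $$ (v div K, u div K)" using symm_entry[OF A] um vm by blast
    have "transpose_mat (Mp K A) $$ (u, v) = Mp K A $$ (v, u)" using u' v' by (simp add: Mp_def)
    also have "\<dots> = Mp K A $$ (u, v)" using u' v' unfolding Mp_def by (simp add: e1 e2 eq_commute[of "v div K"] eq_commute[of "v mod K"])
    finally show ?thesis .
  qed
qed (auto simp: Mp_def)

lemma band_nz: assumes A: "A \<in> carrier_mat K K" and b: "banded m A" and m: "even m"
  and i: "i < K" and j: "j < K" and nz: "A $$ (i,j) \<noteq> 0"
  shows "i \<le> j + m div 2 \<and> j \<le> i + m div 2"
proof -
  have "\<not> real m / 2 < \<bar>real i - real j\<bar>" using b nz i j A unfolding banded_def by auto
  moreover have "real m / 2 = real (m div 2)" using m by (auto elim!: evenE)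
  ultimately show ?thesis by linarith
qed

lemma band_Mp: assumes A: "A \<in> carrier_mat K K" and b: "banded m A" and m: "even m"
  shows "bandw (K * (m div 2)) (Mp K A)"
  unfolding bandw_def
proof (intro allI impI)
  fix u v assume u: "u < dim_row (Mp K A)" and v: "v < dim_col (Mp K A)"
    and uv: "u + K * (m div 2) < v \<or> v + K * (m div 2) < u"
  then have u': "u < K*K" and v': "v < K*K" by (auto simp: Mp_def)
  note um = u_mod_div[OF u'] and vm = u_mod_div[OF v']
  define md where "md = m div 2"
  have K0: "K \<ge> 1" using u' by (cases K) auto
  have eu: "u = u div K * K + u mod K" and ev: "v = v div K * K + v mod K" by simp_all
  have mdK: "md \<le> K * md" using K0 by simp
  have t1: "(if u div K = v div K then A $$ (u mod K, v mod K) else 0) = 0"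
  proof (rule ccontr)
    assume "\<not> ?thesis"
    then have d: "u div K = v div K" and nz: "A $$ (u mod K, v mod K) \<noteq> 0" by (auto split: if_splits)
    from band_nz[OF A b m _ _ nz] um vm have "u mod K \<le> v mod K + md" "v mod K \<le> u mod K + md"
      unfolding md_def by auto
    moreover have "u div K * K = v div K * K" using d by simp
    ultimately show False using uv eu ev mdK unfolding md_def by linarith
  qed
  have t2: "(if u mod K = v mod K then A $$ (v div K, u div K) else 0) = 0"
  proof (rule ccontr)
    assume "\<not> ?thesis"
    then have d: "u mod K = v mod K" and nz: "A $$ (v div K, u div K) \<noteq> 0" by (auto split: if_splits)
    from band_nz[OF A b m _ _ nz] um vm have h: "v div K \<le> u div K + md" "u div K \<le> v div K + md"
      unfolding md_def by auto
    have "v div K * K \<le> (u div K + md) * K" using h(1) by (rule mult_le_mono1)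
    moreover have "u div K * K \<le> (v div K + md) * K" using h(2) by (rule mult_le_mono1)
    ultimately have "v div K * K \<le> u div K * K + md * K" "u div K * K \<le> v div K * K + md * K"
      by (simp_all add: add_mult_distrib)
    moreover have "md * K = K * (m div 2)" unfolding md_def by simp
    ultimately show False using uv eu ev d by linarith
  qed
  show "Mp K A $$ (u, v) = 0" using u' v' t1 t2 by (simp add: Mp_def)
qed


lemma Q_entry: assumes i: "i < K" and j: "j < K" and r: "r < K" and c: "c < K"
  shows "(qcol K i * (p \<cdot>\<^sub>m transpose_mat (qcol K j))) $$ (r,c) = (if r = i \<and> c = j then p else 0)"
  using i j r c by (simp add: qcol_def scalar_prod_def mat_of_cols_def)

lemma Q_carrier: "qcol K i * (p \<cdot>\<^sub>m transpose_mat (qcol K j)) \<in> carrier_mat K K"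
  by (rule mult_carrier_mat[of _ K 1]) (auto simp: qcol_def mat_of_cols_def)

lemma vecm_Q: assumes i: "i < K" and j: "j < K"
  shows "vecm K (qcol K i * (p \<cdot>\<^sub>m transpose_mat (qcol K j))) = p \<cdot>\<^sub>v unit_vec (K*K) (phi K i j)"
proof (rule eq_vecI)
  fix u assume "u < dim_vec (p \<cdot>\<^sub>v unit_vec (K*K) (phi K i j))"
  then have u: "u < K*K" by simp
  note um = u_mod_div[OF u]
  have "(u mod K = i \<and> u div K = j) = (u = phi K i j)"
  proof
    assume "u mod K = i \<and> u div K = j"
    then show "u = phi K i j" unfolding phi_def by (metis div_mult_mod_eq)
  next
    assume "u = phi K i j"
    then show "u mod K = i \<and> u div K = j" unfolding phi_def using i by simp
  qed
  then show "vecm K (qcol K i * (p \<cdot>\<^sub>m transpose_mat (qcol K j))) $ u = (p \<cdot>\<^sub>v unit_vec (K*K) (phi K i j)) $ u"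
    using u um Q_entry[OF i j] by (simp add: unit_vec_def)
qed simp

theorem theorem1:
  fixes K m :: nat and A P :: "real mat"
  assumes K: "K \<ge> 1"
    and m: "m > 0" "even m"
    and A: "A \<in> carrier_mat K K" "symmetric_mat A" "negative_definite A" "banded m A"
    and P: "P \<in> carrier_mat K K"
  shows "(\<forall>i<K. \<forall>j<K. \<forall>Xij \<in> carrier_mat K K.
            A * Xij + Xij * A = qcol K i * (P $$ (i, j) \<cdot>\<^sub>m transpose_mat (qcol K j)) \<longrightarrow>
            (\<forall>s<K^2. \<bar>vec_entry K Xij s\<bar> \<le>
               \<bar>P $$ (i, j)\<bar> * tau1 (lambda_min A) (lambda_max A) *
               rho1 K m (lambda_min A) (lambda_max A) ^ nat \<bar>int (phi K i j) - int s\<bar>))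
       \<and> (\<forall>X \<in> carrier_mat K K. A * X + X * A = P \<longrightarrow>
            (\<forall>s<K^2. \<bar>vec_entry K X s\<bar> \<le>
               tau1 (lambda_min A) (lambda_max A) *
               (\<Sum>i<K. \<Sum>j<K. \<bar>P $$ (i, j)\<bar> *
                  rho1 K m (lambda_min A) (lambda_max A) ^ nat \<bar>int (phi K i j) - int s\<bar>)))"
proof -
  have K0: "K > 0" using K by simp
  have sA: "symm A" using A(2) unfolding symmetric_mat_def symm_def .
  define a where "a = lambda_min A"
  define b where "b = lambda_max A"
  have ne: "{x. eigenvalue A x} \<noteq> {}" by (rule rayleigh_bounds(1)[OF A(1) sA K0])
  have fin: "finite {x. eigenvalue A x}" by (rule eig_finite[OF A(1)])
  have "b \<in> {x. eigenvalue A x}" unfolding b_def lambda_max_def using fin ne by (rule Max_in)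
  then have bneg: "b < 0" using eig_neg[OF A(1) A(3)] by simp
  have "a \<in> {x. eigenvalue A x}" unfolding a_def lambda_min_def using fin ne by (rule Min_in)
  then have ab: "a \<le> b" unfolding b_def lambda_max_def using fin by (intro Max_ge) auto
  define N where "N = K*K"
  define lo where "lo = -2*b"
  define hi where "hi = -2*a"
  define H where "H = K * (m div 2)"
  have lo: "0 < lo" "lo \<le> hi" unfolding lo_def hi_def using bneg ab by auto
  have H1: "H \<ge> 1" unfolding H_def using K m by (auto elim!: evenE)
  have Mc: "Mp K A \<in> carrier_mat N N" unfolding N_def by simp
  have sM: "symm (Mp K A)" by (rule symm_Mp[OF A(1) sA])
  have bM: "bandw H (Mp K A)" unfolding H_def by (rule band_Mp[OF A(1) A(4) m(2)])
  have form: "\<And>w. w \<in> carrier_vec N \<Longrightarrow> lo*(w \<bullet> w) \<le> w \<bullet> (Mp K A *\<^sub>v w) \<and> w \<bullet> (Mp K A *\<^sub>v w) \<le> hi*(w \<bullet> w)"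
    unfolding lo_def hi_def a_def b_def N_def using form_Mp[OF A(1) sA K0] by blast
  have hl: "hi/lo = a/b" unfolding hi_def lo_def by simp
  have tau_eq: "(1/lo) * max 1 ((1 + sqrt(hi/lo))^2/(2*(hi/lo))) = tau1 a b"
    unfolding tau1_def Let_def hl using bneg unfolding lo_def by simp
  have rho_eq: "((sqrt(hi/lo) - 1)/(sqrt(hi/lo)+1)) powr (1/real H) = rho1 K m a b"
  proof -
    have "1 / real H = 2 / real (K * m)" unfolding H_def using m(2) by (auto elim!: evenE)
    then show ?thesis unfolding rho1_def Let_def hl by simp
  qed
  have bound: "\<And>y t \<beta> s. y \<in> carrier_vec N \<Longrightarrow> t < N \<Longrightarrow> Mp K A *\<^sub>v y = \<beta> \<cdot>\<^sub>v unit_vec N t \<Longrightarrow> s < N \<Longrightarrow>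
      \<bar>y $ s\<bar> \<le> \<bar>\<beta>\<bar> * tau1 a b * rho1 K m a b ^ nat \<bar>int t - int s\<bar>"
    using core_bound[OF Mc sM bM H1 lo form] unfolding tau_eq rho_eq by blast
  have sN: "\<And>s. s < K^2 \<longleftrightarrow> s < N" unfolding N_def by (simp add: power2_eq_square)
  have ve: "\<And>X s. s < N \<Longrightarrow> vec_entry K X s = vecm K X $ s" unfolding vec_entry_def N_def by simp
  show ?thesis
  proof (intro conjI allI impI ballI)
    fix i j Xij s
    assume i: "i < K" and j: "j < K" and Xc: "Xij \<in> carrier_mat K K"
      and eq: "A * Xij + Xij * A = qcol K i * (P $$ (i, j) \<cdot>\<^sub>m transpose_mat (qcol K j))"
      and s: "s < K^2"
    have s': "s < N" using s sN by simp
    have t: "phi K i j < N" unfolding phi_def N_def using jk_less[OF i j] by simp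
    have "Mp K A *\<^sub>v vecm K Xij = - vecm K (A * Xij + Xij * A)" by (rule Mp_vecm[OF A(1) Xc])
    also have "\<dots> = (- P $$ (i,j)) \<cdot>\<^sub>v unit_vec N (phi K i j)"
      unfolding eq vecm_Q[OF i j] N_def by (intro eq_vecI) auto
    finally have eqv: "Mp K A *\<^sub>v vecm K Xij = (- P $$ (i,j)) \<cdot>\<^sub>v unit_vec N (phi K i j)" .
    have "\<bar>vecm K Xij $ s\<bar> \<le> \<bar>- P $$ (i,j)\<bar> * tau1 a b * rho1 K m a b ^ nat \<bar>int (phi K i j) - int s\<bar>"
      by (rule bound[OF _ t eqv s']) (simp add: N_def)
    then show "\<bar>vec_entry K Xij s\<bar> \<le> \<bar>P $$ (i, j)\<bar> * tau1 (lambda_min A) (lambda_max A) *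
               rho1 K m (lambda_min A) (lambda_max A) ^ nat \<bar>int (phi K i j) - int s\<bar>"
      unfolding ve[OF s'] a_def b_def by simp
  next
    fix X s
    assume Xc: "X \<in> carrier_mat K K" and eq: "A * X + X * A = P" and s: "s < K^2"
    have s': "s < N" using s sN by simp
    have "det (Mp K A) \<noteq> 0"
    proof
      assume "det (Mp K A) = 0"
      then obtain v where v: "v \<in> carrier_vec N" "v \<noteq> 0\<^sub>v N" "Mp K A *\<^sub>v v = 0\<^sub>v N"
        using det_0_iff_vec_prod_zero[OF Mc] by blast
      have "lo * (v \<bullet> v) \<le> 0" using form[OF v(1)] v(3) v(1) by simp
      then have "v \<bullet> v \<le> 0" using lo by (simp add: mult_le_0_iff)
      then have "v \<bullet> v = 0" using sq_nonneg[of v] by linarith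
      then show False using sq_zero[OF v(1)] v(2) by simp
    qed
    then obtain D where D: "D \<in> carrier_mat N N" "D * Mp K A = 1\<^sub>m N" "Mp K A * D = 1\<^sub>m N"
      using det_inv[OF Mc] by metis
    have Dst: "\<And>t. t < N \<Longrightarrow> \<bar>D $$ (s,t)\<bar> \<le> tau1 a b * rho1 K m a b ^ nat \<bar>int t - int s\<bar>"
    proof -
      fix t assume t: "t < N"
      define y where "y = D *\<^sub>v unit_vec N t"
      have y: "y \<in> carrier_vec N" unfolding y_def using D by simp
      have "(Mp K A * D) *\<^sub>v unit_vec N t = Mp K A *\<^sub>v y" unfolding y_def
        by (rule assoc_mult_mat_vec[OF Mc D(1)]) simp
      then have "Mp K A *\<^sub>v y = (Mp K A * D) *\<^sub>v unit_vec N t" by simp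
      also have "\<dots> = 1 \<cdot>\<^sub>v unit_vec N t" using D by simp
      finally have "\<bar>y $ s\<bar> \<le> \<bar>1\<bar> * tau1 a b * rho1 K m a b ^ nat \<bar>int t - int s\<bar>" by (rule bound[OF y t _ s'])
      moreover have "y $ s = D $$ (s,t)" unfolding y_def using D s' t by simp
      ultimately show "\<bar>D $$ (s,t)\<bar> \<le> tau1 a b * rho1 K m a b ^ nat \<bar>int t - int s\<bar>" by simp
    qed
    have x: "vecm K X = D *\<^sub>v (- vecm K P)"
    proof -
      have "vecm K X = (D * Mp K A) *\<^sub>v vecm K X" unfolding D(2) N_def by simp
      also have "\<dots> = D *\<^sub>v (Mp K A *\<^sub>v vecm K X)"
        by (rule assoc_mult_mat_vec[OF D(1) Mc]) (simp add: N_def)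
      also have "Mp K A *\<^sub>v vecm K X = - vecm K P" unfolding Mp_vecm[OF A(1) Xc] eq ..
      finally show ?thesis .
    qed
    have "vecm K X $ s = (\<Sum>t\<in>{0..<N}. D $$ (s,t) * (- (vecm K P $ t)))"
      unfolding x using D s' unfolding N_def by (simp add: scalar_prod_def)
    then have "\<bar>vecm K X $ s\<bar> \<le> (\<Sum>t\<in>{0..<N}. \<bar>D $$ (s,t)\<bar> * \<bar>vecm K P $ t\<bar>)"
      by (simp add: abs_mult order_trans[OF sum_abs])
    also have "\<dots> \<le> (\<Sum>t\<in>{0..<N}. tau1 a b * rho1 K m a b ^ nat \<bar>int t - int s\<bar> * \<bar>vecm K P $ t\<bar>)"
      by (intro sum_mono mult_right_mono Dst) auto
    also have "\<dots> = tau1 a b * (\<Sum>t\<in>{0..<K*K}. \<bar>vecm K P $ t\<bar> * rho1 K m a b ^ nat \<bar>int t - int s\<bar>)"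
      unfolding N_def sum_distrib_left by (simp add: mult_ac)
    also have "(\<Sum>t\<in>{0..<K*K}. \<bar>vecm K P $ t\<bar> * rho1 K m a b ^ nat \<bar>int t - int s\<bar>)
       = (\<Sum>j<K. \<Sum>i<K. \<bar>P $$ (i,j)\<bar> * rho1 K m a b ^ nat \<bar>int (phi K i j) - int s\<bar>)"
      unfolding sum_vecm
    proof (intro sum.cong refl)
      fix j i assume j: "j \<in> {..<K}" and i: "i \<in> {..<K}"
      then show "\<bar>vecm K P $ (j*K + i)\<bar> * rho1 K m a b ^ nat \<bar>int (j*K + i) - int s\<bar> =
          \<bar>P $$ (i,j)\<bar> * rho1 K m a b ^ nat \<bar>int (phi K i j) - int s\<bar>"
        using jk_less[of i K j] unfolding phi_def by (simp add: jk_mod jk_div)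
    qed
    also have "\<dots> = (\<Sum>i<K. \<Sum>j<K. \<bar>P $$ (i,j)\<bar> * rho1 K m a b ^ nat \<bar>int (phi K i j) - int s\<bar>)"
      by (rule sum.swap)
    finally show "\<bar>vec_entry K X s\<bar> \<le> tau1 (lambda_min A) (lambda_max A) *
               (\<Sum>i<K. \<Sum>j<K. \<bar>P $$ (i, j)\<bar> *
                  rho1 K m (lambda_min A) (lambda_max A) ^ nat \<bar>int (phi K i j) - int s\<bar>)"
      unfolding ve[OF s'] a_def b_def by simp
  qed
qed


end
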